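(* For $\mathbf{q}, \mathbf{r}\in(\mathbb{Z}_{\ge0})^{n}$ with $n\ge1$, we have \[\frac{d}{d\sigma}F_{\mathbf{q}}^{\mathbf{r}}(\sigma) = i(i\sigma)^{q_{n}}\left(\mathrm{Li}_{1}(e^{i\sigma})\right)^{r_{n}}F_{\mathbf{q}_{-}}^{\mathbf{r}_{-}}(\sigma).\]
   Context: Notation: $|\mathbf{k}|=k_1+\dots+k_n$, $\mathrm{dep}(\mathbf{k})=n$, $\mathbf{k}_{-}=(k_1,\dots,k_{n-1})$. $\mathrm{Li}_{\mathbf{k}}(z)=\sum_{0<m_1<\dots<m_n} z^{m_n}/(m_1^{k_1}\cdots m_n^{k_n})$, $\mathrm{Li}_\emptyset=1$; $\sigma\in[0,2\pi]$. Let $B_{\mathbf{q}}=\frac{1}{|\mathbf{q}|+n}B_{\mathbf{q}_-}$, $B_\emptyset=1$; $C_{\mathbf{q}}^{\mathbf{j}}=(-1)^{j_n}\frac{(|\mathbf{q}|-|\mathbf{j}_-|)!}{(|\mathbf{q}|-|\mathbf{j}|)!}C_{\mathbf{q}_-}^{\mathbf{j}_-}$, $C_\emptyset^\emptyset=1$. Write $\mathbf{j}\preceq\mathbf{q}$ if $j_1+\dots+j_s\le q_1+\dots+q_s$ for all $s$. Let $\mathfrak{H}=\mathbb{Q}\langle e_0,e_1\rangle$, $\mathfrak{H}^1=\mathbb{Q}+e_1\mathfrak{H}$, with shuffle product $\sqcup\!\sqcup$: $w\sqcup\!\sqcup 1=1\sqcup\!\sqcup w=w$, $u_1w_1\sqcup\!\sqcup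 u_2w_2=u_1(w_1\sqcup\!\sqcup u_2w_2)+u_2(u_1w_1\sqcup\!\sqcup w_2)$ ($u_i\in\{e_0,e_1\}$), $\mathbb{Q}$-bilinear. Define $w_{\mathbf{j}}^{\mathbf{r}}=(w_{\mathbf{j}_-}^{\mathbf{r}_-}\sqcup\!\sqcup e_1^{\sqcup\!\sqcup r_n})e_0^{1+j_n}$, $w_\emptyset^\emptyset=1$. $L(\cdot;z):\mathfrak{H}^1\to\mathbb{C}$ is $\mathbb{Q}$-linear with $L(e_1e_0^{k_1-1}\cdots e_1e_0^{k_n-1};z)=\mathrm{Li}_{k_1,\dots,k_n}(z)$, $L(1;z)=1$. For $\mathbf{q},\mathbf{r}\in(\mathbb{Z}_{\ge0})^n$ write $\mathbf{r}=(\{0\}^{n'},r''_1,\dots,r''_{n''})=(\mathbf{r}',\mathbf{r}'')$ with $r''_1\ge1$, $\mathbf{q}=(\mathbf{q}',\mathbf{q}'')$ with $\mathbf{q}'$ of length $n'$, $\overline{\mathbf{q}}=(|\mathbf{q}'|+n'+q''_1,q''_2,\dots,q''_{n''})$ (or $\emptyset$). Define $f_{\mathbf{q}}^{\mathbf{r}}(\sigma)=B_{\mathbf{q}'}\sum_{\mathbf{j}\preceq\overline{\mathbf{q}}}C_{\overline{\mathbf{q}}}^{\mathbf{j}}(i\sigma)^{|\mathbf{q}|+n'-|\mathbf{j}|}L(w_{\mathbf{j}}^{\mathbf{r}''};e^{i\sigma})$ (sum over $\mathbf{j}\in(\mathbb{Z}_{\ge0})^{n''}$), and $F_{\mathbf{q}}^{\mathbf{r}}(\sigma)=\sum(-1)^{h-1}\Bigl(\prod_{j=1}^{h-1}f_{\mathbf{q}^{(j)}}^{\mathbf{r}^{(j)}}(0)\Bigr)\bigl(f_{\mathbf{q}^{(h)}}^{\mathbf{r}^{(h)}}(\sigma)-f_{\mathbf{q}^{(h)}}^{\mathbf{r}^{(h)}}(0)\bigr)$,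 summed over all decompositions $\mathbf{q}=(\mathbf{q}^{(1)},\dots,\mathbf{q}^{(h)})$, $\mathbf{r}=(\mathbf{r}^{(1)},\dots,\mathbf{r}^{(h)})$ into consecutive blocks with $\mathrm{dep}(\mathbf{q}^{(j)})=\mathrm{dep}(\mathbf{r}^{(j)})\ge1$; $F_\emptyset^\emptyset=1$. It is known that $\frac{d}{d\sigma}f_{\mathbf{q}}^{\mathbf{r}}(\sigma)=i(i\sigma)^{q_n}(\mathrm{Li}_1(e^{i\sigma}))^{r_n}f_{\mathbf{q}_-}^{\mathbf{r}_-}(\sigma)$ for $n\ge1$. *)

theory Defs
  imports Complex_Main
begin

text \<open>Truncated nested harmonic sums, indices given in reversed order:
  hsum [k_n', ..., k_1] N = sum over 0<m_1<...<m_n' <= N of 1/(m_1^k_1 ... m_n'^k_n').\<close>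
fun hsum :: "nat list \<Rightarrow> nat \<Rightarrow> complex" where
  "hsum [] N = 1"
| "hsum (k # ks) N = (\<Sum>m\<in>{1..N}. hsum ks (m - 1) / of_nat m ^ k)"

text \<open>Li_k(z) = sum over 0<m_1<...<m_n of z^(m_n)/(m_1^k_1 ... m_n^k_n),
  summed in the order of the outermost index m_n; Li_[] = 1.\<close>
definition Li :: "nat list \<Rightarrow> complex \<Rightarrow> complex" where
  "Li ks z = (if ks = [] then 1 else
     (\<Sum>m. z ^ Suc m / of_nat (Suc m) ^ last ks * hsum (tl (rev ks)) m))"

datatype letter = E0 | E1

type_synonym word = "letter list"

text \<open>Elements of the algebra H are represented as formal Q-linear combinations
  (lists of coefficient/word pairs).\<close>
type_synonym hpoly = "(rat \<times> word) list"

fun shuf :: "word \<Rightarrow> word \<Rightarrow> word list" where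
  "shuf [] v = [v]"
| "shuf u [] = [u]"
| "shuf (a # u) (b # v) = map ((#) a) (shuf u (b # v)) @ map ((#) b) (shuf (a # u) v)"

definition shuffle :: "hpoly \<Rightarrow> hpoly \<Rightarrow> hpoly" where
  "shuffle P Q = concat (map (\<lambda>(c, u). concat (map (\<lambda>(d, v). map (\<lambda>w. (c * d, w)) (shuf u v)) Q)) P)"

fun e1pow :: "nat \<Rightarrow> hpoly" where
  "e1pow 0 = [(1, [])]"
| "e1pow (Suc r) = shuffle (e1pow r) [(1, [E1])]"

text \<open>w_j^r, with j and r given in reversed order.\<close>
fun wrev :: "nat list \<Rightarrow> nat list \<Rightarrow> hpoly" where
  "wrev (j # js) (r # rs) =
     map (\<lambda>(c, u). (c, u @ replicate (Suc j) E0)) (shuffle (wrev js rs) (e1pow r))"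
| "wrev _ _ = [(1, [])]"

definition wjr :: "nat list \<Rightarrow> nat list \<Rightarrow> hpoly" where
  "wjr j r = wrev (rev j) (rev r)"

text \<open>Index of a word e_1 e_0^(k_1-1) ... e_1 e_0^(k_n-1) (computed from the reversed word).\<close>
fun idx_rev :: "nat \<Rightarrow> word \<Rightarrow> nat list" where
  "idx_rev acc [] = []"
| "idx_rev acc (E0 # w) = idx_rev (Suc acc) w"
| "idx_rev acc (E1 # w) = Suc acc # idx_rev 0 w"

definition word_idx :: "word \<Rightarrow> nat list" where
  "word_idx w = rev (idx_rev 0 (rev w))"

text \<open>L on words of H^1 = Q + e_1 H (value 0 outside H^1, never used).\<close>
definition Lword :: "word \<Rightarrow> complex \<Rightarrow> complex" where
  "Lword w z = (if w = [] then 1 else if hd w = E1 then Li (word_idx w) z else 0)"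

definition L :: "hpoly \<Rightarrow> complex \<Rightarrow> complex" where
  "L P z = (\<Sum>(c, u)\<leftarrow>P. of_rat c * Lword u z)"

fun Brev :: "nat list \<Rightarrow> complex" where
  "Brev [] = 1"
| "Brev (q # qs) = Brev qs / of_nat (sum_list (q # qs) + length (q # qs))"

definition B :: "nat list \<Rightarrow> complex" where
  "B q = Brev (rev q)"

fun Crev :: "nat list \<Rightarrow> nat list \<Rightarrow> complex" where
  "Crev (q # qs) (j # js) =
     (-1) ^ j * of_nat (fact (sum_list (q # qs) - sum_list js))
       / of_nat (fact (sum_list (q # qs) - sum_list (j # js))) * Crev qs js"
| "Crev _ _ = 1"

definition C :: "nat list \<Rightarrow> nat list \<Rightarrow> complex" where
  "C q j = Crev (rev q) (rev j)"

definition prec :: "nat list \<Rightarrow> nat list \<Rightarrow> bool" where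
  "prec j q \<longleftrightarrow> length j = length q \<and> (\<forall>s\<le>length q. sum_list (take s j) \<le> sum_list (take s q))"

definition f :: "nat list \<Rightarrow> nat list \<Rightarrow> real \<Rightarrow> complex" where
  "f q r \<sigma> = (let n' = length (takeWhile (\<lambda>x. x = 0) r);
                 r'' = drop n' r; q' = take n' q; q'' = drop n' q;
                 qbar = (if q'' = [] then [] else (sum_list q' + n' + hd q'') # tl q'')
             in B q' * (\<Sum>j\<in>{j. prec j qbar}.
                  C qbar j * (\<i> * complex_of_real \<sigma>) ^ (sum_list q + n' - sum_list j)
                    * L (wjr j r'') (exp (\<i> * complex_of_real \<sigma>))))"

definition comps :: "nat \<Rightarrow> nat list set" where
  "comps n = {c. (\<forall>x\<in>set c. 0 < x) \<and> sum_list c = n}"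

fun blocks :: "nat list \<Rightarrow> 'a list \<Rightarrow> 'a list list" where
  "blocks [] xs = []"
| "blocks (c # cs) xs = take c xs # blocks cs (drop c xs)"

definition F :: "nat list \<Rightarrow> nat list \<Rightarrow> real \<Rightarrow> complex" where
  "F q r \<sigma> = (if q = [] then 1 else
     (\<Sum>c\<in>comps (length q).
        let qs = blocks c q; rs = blocks c r; h = length c in
        (-1) ^ (h - 1) * (\<Prod>j<h - 1. f (qs ! j) (rs ! j) 0)
          * (f (qs ! (h - 1)) (rs ! (h - 1)) \<sigma> - f (qs ! (h - 1)) (rs ! (h - 1)) 0)))"

end

theory Submission
  imports Defs "HOL-Analysis.Analysis" "HOL-Analysis.FPS_Convergence" "HOL-Analysis.Harmonic_Numbers"
begin

unbundle no vec_syntax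
unbundle fps_syntax

lemma shuf_Nil2[simp]: "shuf u [] = [u]"
  by (cases u) auto

lemma mset_shuf_snoc:
  "mset (shuf (u@[a]) (v@[b])) =
     image_mset (\<lambda>w. w@[a]) (mset (shuf u (v@[b]))) + image_mset (\<lambda>w. w@[b]) (mset (shuf (u@[a]) v))"
proof (induction u arbitrary: v)
  case Nil
  show ?case
  proof (induction v)
    case Nil then show ?case by simp
  next
    case (Cons y v1)
    then show ?case by (simp add: multiset.map_comp comp_def)
  qed
next
  case (Cons x u1)
  note IH = Cons.IH
  show ?case
  proof (induction v)
    case Nil
    then show ?case using IH[of "[]"] by (simp add: multiset.map_comp comp_def)
  next
    case (Cons y v1)
    then show ?case using IH[of "y#v1"] IH[of v1] by (simp add: multiset.map_comp comp_def algebra_simps)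
  qed
qed

definition cf :: "nat list \<Rightarrow> nat \<Rightarrow> complex" where
  "cf ks m = hsum (tl (rev ks)) m / of_nat (Suc m) ^ last ks"

definition LiF :: "nat list \<Rightarrow> complex fps" where
  "LiF ks = (if ks = [] then 1 else Abs_fps (\<lambda>n. if n = 0 then 0 else cf ks (n - 1)))"

lemma LiF_nth: "ks \<noteq> [] \<Longrightarrow> LiF ks $ n = (if n = 0 then 0 else cf ks (n - 1))"
  by (simp add: LiF_def)

lemma hsum_0: "ks \<noteq> [] \<Longrightarrow> hsum ks 0 = 0"
  by (cases ks) auto

lemma hsum_Suc: "hsum (k#ks) (Suc m) = hsum (k#ks) m + hsum ks m / of_nat (Suc m) ^ k"
  by simp

lemma LiF_E0:
  assumes "1 \<le> s"
  shows "fps_X * fps_deriv (LiF (k@[Suc s])) = LiF (k@[s])"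
proof (rule fps_ext)
  fix n
  show "(fps_X * fps_deriv (LiF (k @ [Suc s]))) $ n = LiF (k @ [s]) $ n"
  proof (cases n)
    case 0 then show ?thesis by (simp add: LiF_nth)
  next
    case (Suc m)
    have "(fps_X * fps_deriv (LiF (k @ [Suc s]))) $ n = of_nat (Suc m) * cf (k @ [Suc s]) m"
      using Suc by (simp add: fps_X_mult_nth LiF_nth)
    also have "\<dots> = cf (k @ [s]) m"
    proof -
      have nz: "(of_nat (Suc m) :: complex) \<noteq> 0" by (simp del: of_nat_Suc)
      have "cf (k @ [Suc s]) m = hsum (rev k) m / (of_nat (Suc m) * of_nat (Suc m) ^ s)"
        by (simp add: cf_def del: of_nat_Suc)
      then show ?thesis using nz by (simp add: cf_def del: of_nat_Suc)
    qed
    finally show ?thesis using Suc by (simp add: LiF_nth)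
  qed
qed

lemma LiF_E1: "(1 - fps_X) * fps_deriv (LiF (k@[1])) = LiF k"
proof (rule fps_ext)
  fix n
  have D: "fps_deriv (LiF (k@[1])) $ m = hsum (rev k) m" for m
  proof -
    have nz: "(of_nat (Suc m) :: complex) \<noteq> 0" by (simp del: of_nat_Suc)
    have "fps_deriv (LiF (k@[1])) $ m = of_nat (Suc m) * cf (k@[1]) m"
      by (simp add: LiF_nth del: of_nat_Suc)
    also have "\<dots> = hsum (rev k) m" using nz by (simp add: cf_def del: of_nat_Suc)
    finally show ?thesis .
  qed
  have "((1 - fps_X) * fps_deriv (LiF (k@[1]))) $ n
        = fps_deriv (LiF (k@[1])) $ n - (fps_X * fps_deriv (LiF (k@[1]))) $ n"
    by (simp add: algebra_simps)
  also have "\<dots> = LiF k $ n"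
  proof (cases n)
    case 0
    then show ?thesis using D[of 0]
      by (cases "rev k") (auto simp: LiF_def fps_X_mult_nth)
  next
    case (Suc m)
    show ?thesis
    proof (cases "k = []")
      case True
      have a: "fps_deriv (LiF (k@[1])) $ n = 1" using D[of n] True by simp
      have b: "(fps_X * fps_deriv (LiF (k@[1]))) $ n = 1" using D[of m] True Suc
        by (simp only: fps_X_mult_nth) simp
      show ?thesis using a b True Suc by (simp add: LiF_def)
    next
      case False
      then obtain x xs where rk: "rev k = x # xs" by (cases "rev k") auto
      then have "last k = x" "tl (rev k) = xs"
        by (metis last_rev list.sel(1) rev_rev_ident, simp)
      note lx = this
      have a: "fps_deriv (LiF (k@[1])) $ n = hsum (rev k) (Suc m)" using D[of n] Suc by simp
      have b: "(fps_X * fps_deriv (LiF (k@[1]))) $ n = hsum (rev k) m" using D[of m] Suc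
        by (simp only: fps_X_mult_nth) simp
      have "hsum (rev k) (Suc m) - hsum (rev k) m = hsum xs m / of_nat (Suc m) ^ x"
        unfolding rk hsum_Suc by simp
      then show ?thesis using a b False Suc lx by (simp add: LiF_nth cf_def)
    qed
  qed
  finally show "((1 - fps_X) * fps_deriv (LiF (k@[1]))) $ n = LiF k $ n" .
qed

definition H1 :: "word \<Rightarrow> bool" where
  "H1 w \<longleftrightarrow> w = [] \<or> hd w = E1"

definition LWF :: "word \<Rightarrow> complex fps" where
  "LWF w = (if w = [] then 1 else if hd w = E1 then LiF (word_idx w) else 0)"

lemma idx_rev_Suc:
  "idx_rev (Suc a) w = (case idx_rev a w of [] \<Rightarrow> [] | y#ys \<Rightarrow> Suc y # ys)"
proof (induction w arbitrary: a)
  case Nil then show ?case by simp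
next
  case (Cons l w) then show ?case by (cases l) auto
qed

lemma idx_rev_nonempty: "E1 \<in> set w \<Longrightarrow> idx_rev a w \<noteq> []"
proof (induction w arbitrary: a)
  case Nil then show ?case by simp
next
  case (Cons l w) then show ?case by (cases l) auto
qed

lemma idx_rev_pos: "x \<in> set (idx_rev a w) \<Longrightarrow> 1 \<le> x"
proof (induction w arbitrary: a)
  case Nil then show ?case by simp
next
  case (Cons l w) then show ?case by (cases l) auto
qed

lemma word_idx_pos: "x \<in> set (word_idx w) \<Longrightarrow> 1 \<le> x"
  by (metis idx_rev_pos set_rev word_idx_def)

lemma word_idx_nonempty: "E1 \<in> set w \<Longrightarrow> word_idx w \<noteq> []"
  by (simp add: word_idx_def idx_rev_nonempty)

lemma word_idx_E1: "word_idx (w@[E1]) = word_idx w @ [1]"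
  by (simp add: word_idx_def)

lemma word_idx_E0:
  assumes "E1 \<in> set w"
  shows "word_idx (w@[E0]) = butlast (word_idx w) @ [Suc (last (word_idx w))]"
proof -
  obtain y ys where e: "idx_rev 0 (rev w) = y # ys"
    using idx_rev_nonempty[of "rev w" 0] assms by (cases "idx_rev 0 (rev w)") auto
  show ?thesis
    by (simp add: word_idx_def idx_rev_Suc[of 0, simplified] e)
qed

lemma H1_hd: "w \<noteq> [] \<Longrightarrow> hd w = E1 \<Longrightarrow> E1 \<in> set w"
  by (cases w) auto

lemma LWF_0: "w \<noteq> [] \<Longrightarrow> LWF w $ 0 = 0"
  using word_idx_nonempty[OF H1_hd, of w] by (auto simp: LWF_def LiF_nth)

lemma LWF_E0:
  assumes "w \<noteq> []" "hd w = E1"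
  shows "fps_X * fps_deriv (LWF (w@[E0])) = LWF w"
proof -
  have ne: "word_idx w \<noteq> []" using word_idx_nonempty[OF H1_hd[OF assms]] .
  then obtain k s where ks: "word_idx w = k @ [s]" by (metis append_butlast_last_id)
  have s1: "1 \<le> s" using word_idx_pos[of s w] ks by simp
  have "word_idx (w@[E0]) = k @ [Suc s]"
    using word_idx_E0[OF H1_hd[OF assms]] ks by simp
  then show ?thesis using assms ks LiF_E0[OF s1, of k] by (simp add: LWF_def)
qed

lemma LWF_E1:
  assumes "H1 w"
  shows "(1 - fps_X) * fps_deriv (LWF (w@[E1])) = LWF w"
proof (cases "w = []")
  case True
  have "word_idx [E1] = [1]" by (simp add: word_idx_def)
  then show ?thesis using True LiF_E1[of "[]"] by (simp add: LWF_def LiF_def[of "[]"])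
next
  case False
  then have "hd w = E1" using assms by (simp add: H1_def)
  then show ?thesis using False LiF_E1[of "word_idx w"] by (simp add: LWF_def word_idx_E1)
qed

definition mb :: "letter \<Rightarrow> complex fps" where
  "mb a = (case a of E0 \<Rightarrow> 1 - fps_X | E1 \<Rightarrow> fps_X)"

lemma LWF_snoc:
  assumes "H1 w" "w \<noteq> [] \<or> a = E1"
  shows "fps_X * (1 - fps_X) * fps_deriv (LWF (w@[a])) = mb a * LWF w"
proof (cases a)
  case E0
  then have "w \<noteq> []" "hd w = E1" using assms by (auto simp: H1_def)
  have "fps_X * (1 - fps_X) * fps_deriv (LWF (w@[a])) = (1 - fps_X) * (fps_X * fps_deriv (LWF (w@[E0])))"
    using E0 by (simp add: ac_simps)
  then show ?thesis using LWF_E0[of w] E0 \<open>w \<noteq> []\<close> \<open>hd w = E1\<close> by (simp add: mb_def)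
next
  case E1
  have "fps_X * (1 - fps_X) * fps_deriv (LWF (w@[a])) = fps_X * ((1 - fps_X) * fps_deriv (LWF (w@[E1])))"
    using E1 by (simp add: ac_simps)
  then show ?thesis using LWF_E1[OF assms(1)] E1 by (simp add: mb_def)
qed

lemma sum_list_shuf_snoc:
  fixes g :: "word \<Rightarrow> 'b::comm_monoid_add"
  shows "sum_list (map g (shuf (u@[a]) (v@[b]))) =
     sum_list (map (\<lambda>w. g (w@[a])) (shuf u (v@[b]))) + sum_list (map (\<lambda>w. g (w@[b])) (shuf (u@[a]) v))"
proof -
  have e: "sum_list (map h xs) = sum_mset (image_mset h (mset xs))" for h :: "word \<Rightarrow> 'b" and xs
    by (metis mset_map sum_mset_sum_list)
  show ?thesis unfolding e mset_shuf_snoc by (simp add: multiset.map_comp comp_def)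
qed

lemma shuf_H1: "w \<in> set (shuf u v) \<Longrightarrow> H1 u \<Longrightarrow> H1 v \<Longrightarrow> H1 w"
  by (induction u v arbitrary: w rule: shuf.induct) (auto simp: H1_def)

lemma shuf_length: "w \<in> set (shuf u v) \<Longrightarrow> length w = length u + length v"
  by (induction u v arbitrary: w rule: shuf.induct) auto

lemma fps_nth_sum_list: "sum_list xs $ n = sum_list (map (\<lambda>x. x $ n) xs)"
  by (induction xs) auto

lemma deriv_sum_snoc:
  assumes "\<And>w. w \<in> set ws \<Longrightarrow> H1 w \<and> (w \<noteq> [] \<or> a = E1)"
  shows "fps_X * (1 - fps_X) * fps_deriv (sum_list (map (\<lambda>w. LWF (w@[a])) ws)) = mb a * sum_list (map LWF ws)"
  using assms
proof (induction ws)
  case Nil then show ?case by simp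
next
  case (Cons w ws)
  have "fps_X * (1 - fps_X) * fps_deriv (sum_list (map (\<lambda>w. LWF (w@[a])) (w#ws)))
     = fps_X * (1 - fps_X) * fps_deriv (LWF (w@[a])) + fps_X * (1 - fps_X) * fps_deriv (sum_list (map (\<lambda>w. LWF (w@[a])) ws))"
    by (simp add: algebra_simps)
  also have "\<dots> = mb a * LWF w + mb a * sum_list (map LWF ws)"
  proof -
    have IH: "fps_X * (1 - fps_X) * fps_deriv (sum_list (map (\<lambda>w. LWF (w@[a])) ws)) = mb a * sum_list (map LWF ws)"
      by (rule Cons.IH) (use Cons.prems in auto)
    have "fps_X * (1 - fps_X) * fps_deriv (LWF (w@[a])) = mb a * LWF w"
      using Cons.prems[of w] LWF_snoc[of w a] by simp
    then show ?thesis using IH by simp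
  qed
  finally show ?case by (simp add: algebra_simps)
qed

lemma H1_butlast: "H1 (u@[a]) \<Longrightarrow> H1 u"
  by (cases u) (auto simp: H1_def)

lemma sum_LWF_0: "\<forall>w\<in>set ws. w \<noteq> [] \<Longrightarrow> sum_list (map LWF ws) $ 0 = 0"
  by (induction ws) (auto simp: LWF_0)

theorem LWF_shuf:
  assumes "H1 u" "H1 v"
  shows "sum_list (map LWF (shuf u v)) = LWF u * LWF v"
  using assms
proof (induction "length u + length v" arbitrary: u v rule: less_induct)
  case less
  show ?case
  proof (cases "u = [] \<or> v = []")
    case True then show ?thesis by (auto simp: LWF_def)
  next
    case False
    then obtain u' a v' b where u: "u = u'@[a]" and v: "v = v'@[b]"
      by (metis rev_exhaust)
    have Hu': "H1 u'" and Hv': "H1 v'" using less.prems u v H1_butlast by auto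
    define S where "S = sum_list (map LWF (shuf u v))"
    have S: "S = sum_list (map (\<lambda>w. LWF (w@[a])) (shuf u' v)) + sum_list (map (\<lambda>w. LWF (w@[b])) (shuf u v'))"
      unfolding S_def u v by (rule sum_list_shuf_snoc)
    have IH1: "sum_list (map LWF (shuf u' v)) = LWF u' * LWF v"
      using less.hyps[of u' v] Hu' less.prems u by simp
    have IH2: "sum_list (map LWF (shuf u v')) = LWF u * LWF v'"
      using less.hyps[of u v'] Hv' less.prems v by simp
    have c1: "H1 w \<and> (w \<noteq> [] \<or> a = E1)" if "w \<in> set (shuf u' v)" for w
      using shuf_H1[OF that Hu' less.prems(2)] shuf_length[OF that] v by auto
    have c2: "H1 w \<and> (w \<noteq> [] \<or> b = E1)" if "w \<in> set (shuf u v')" for w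
      using shuf_H1[OF that less.prems(1) Hv'] shuf_length[OF that] u by auto
    have cu: "u' \<noteq> [] \<or> a = E1" using less.prems(1) u by (cases u') (auto simp: H1_def)
    have cv: "v' \<noteq> [] \<or> b = E1" using less.prems(2) v by (cases v') (auto simp: H1_def)
    have dS: "fps_X * (1 - fps_X) * fps_deriv S = mb a * (LWF u' * LWF v) + mb b * (LWF u * LWF v')"
      unfolding S fps_deriv_add distrib_left
      using deriv_sum_snoc[of "shuf u' v" a, OF c1] deriv_sum_snoc[of "shuf u v'" b, OF c2] IH1 IH2
      by simp
    have dR: "fps_X * (1 - fps_X) * fps_deriv (LWF u * LWF v) = mb a * (LWF u' * LWF v) + mb b * (LWF u * LWF v')"
    proof -
      have "fps_X * (1 - fps_X) * fps_deriv (LWF u * LWF v) =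
            (fps_X * (1 - fps_X) * fps_deriv (LWF u)) * LWF v + LWF u * (fps_X * (1 - fps_X) * fps_deriv (LWF v))"
        by (simp add: fps_deriv_mult algebra_simps)
      also have "\<dots> = mb a * LWF u' * LWF v + LWF u * (mb b * LWF v')"
        using LWF_snoc[OF Hu' cu] LWF_snoc[OF Hv' cv] u v by simp
      finally show ?thesis by (simp add: algebra_simps)
    qed
    have nz: "fps_X * (1 - fps_X) \<noteq> (0 :: complex fps)"
    proof
      assume "fps_X * (1 - fps_X) = (0 :: complex fps)"
      then have "(fps_X * (1 - fps_X) :: complex fps) $ 1 = 0" by simp
      then show False by (simp add: fps_X_mult_nth)
    qed
    have "fps_deriv S = fps_deriv (LWF u * LWF v)"
      using dS dR nz by (metis mult_left_cancel)
    then have eq: "S = fps_const (S $ 0 - (LWF u * LWF v) $ 0) + LWF u * LWF v"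
      by (rule fps_deriv_eq_iff[THEN iffD1])
    have "S $ 0 = 0"
    proof -
      have "\<forall>w\<in>set (shuf u v). w \<noteq> []" using shuf_length u by fastforce
      then show ?thesis unfolding S_def by (rule sum_LWF_0)
    qed
    moreover have "(LWF u * LWF v) $ 0 = 0" using LWF_0[of u] u by simp
    ultimately show ?thesis using eq S_def by simp
  qed
qed

definition Lp :: "hpoly \<Rightarrow> complex fps" where
  "Lp P = sum_list (map (\<lambda>(c, u). fps_const (of_rat c) * LWF u) P)"

definition H1p :: "hpoly \<Rightarrow> bool" where
  "H1p P \<longleftrightarrow> (\<forall>(c, u)\<in>set P. H1 u)"

lemma Lp_append[simp]: "Lp (P @ Q) = Lp P + Lp Q"
  by (simp add: Lp_def)

lemma Lp_Cons[simp]: "Lp ((c,u) # P) = fps_const (of_rat c) * LWF u + Lp P"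
  by (simp add: Lp_def)

lemma Lp_Nil[simp]: "Lp [] = 0"
  by (simp add: Lp_def)

lemma Lp_concat: "Lp (concat Ps) = sum_list (map Lp Ps)"
  by (induction Ps) auto

lemma Lp_map_const: "Lp (map (\<lambda>w. (e, w)) ws) = fps_const (of_rat e) * sum_list (map LWF ws)"
  by (induction ws) (auto simp: algebra_simps)

lemma shuffle_Nil1[simp]: "shuffle [] Q = []"
  by (simp add: shuffle_def)

lemma shuffle_Cons1: "shuffle ((c,u) # P) Q = concat (map (\<lambda>(d, v). map (\<lambda>w. (c * d, w)) (shuf u v)) Q) @ shuffle P Q"
  by (simp add: shuffle_def)

lemma Lp_shuffle:
  assumes "H1p P" "H1p Q"
  shows "Lp (shuffle P Q) = Lp P * Lp Q"
  using assms(1)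
proof (induction P)
  case Nil then show ?case by simp
next
  case (Cons p P)
  obtain c u where p: "p = (c,u)" by (cases p)
  have Hu: "H1 u" using Cons.prems p by (simp add: H1p_def)
  have HP: "H1p P" using Cons.prems by (simp add: H1p_def)
  have "Lp (concat (map (\<lambda>(d, v). map (\<lambda>w. (c * d, w)) (shuf u v)) Q)) = fps_const (of_rat c) * LWF u * Lp Q"
    using assms(2)
  proof (induction Q)
    case Nil then show ?case by simp
  next
    case (Cons q Q)
    obtain d v where q: "q = (d,v)" by (cases q)
    have Hv: "H1 v" using Cons.prems q by (simp add: H1p_def)
    have HQ: "H1p Q" using Cons.prems by (simp add: H1p_def)
    have e1: "Lp (map (\<lambda>w. (c * d, w)) (shuf u v)) = fps_const (of_rat c) * fps_const (of_rat d) * (LWF u * LWF v)"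
      by (simp add: Lp_map_const LWF_shuf[OF Hu Hv] of_rat_mult)
    have "Lp (concat (map (\<lambda>(d, v). map (\<lambda>w. (c * d, w)) (shuf u v)) (q # Q)))
        = Lp (map (\<lambda>w. (c * d, w)) (shuf u v)) + Lp (concat (map (\<lambda>(d, v). map (\<lambda>w. (c * d, w)) (shuf u v)) Q))"
      using q by simp
    also have "\<dots> = fps_const (of_rat c) * fps_const (of_rat d) * (LWF u * LWF v) + fps_const (of_rat c) * LWF u * Lp Q"
      using e1 Cons.IH[OF HQ] by simp
    also have "\<dots> = fps_const (of_rat c) * LWF u * Lp (q # Q)"
      using q by (simp add: distrib_left mult.assoc mult.left_commute)
    finally show ?case .
  qed
  then show ?case using Cons.IH[OF HP] p by (simp add: shuffle_Cons1 algebra_simps)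
qed

lemma H1p_shuffle:
  assumes "H1p P" "H1p Q"
  shows "H1p (shuffle P Q)"
  unfolding H1p_def
proof (clarify)
  fix e w assume "(e, w) \<in> set (shuffle P Q)"
  then obtain c u d v where "(c,u) \<in> set P" "(d,v) \<in> set Q" "w \<in> set (shuf u v)"
    by (auto simp: shuffle_def)
  then show "H1 w" using assms shuf_H1 unfolding H1p_def by fastforce
qed

lemma H1p_e1pow: "H1p (e1pow r)"
proof (induction r)
  case 0 then show ?case by (simp add: H1p_def H1_def)
next
  case (Suc r)
  have "H1p [(1, [E1])]" by (simp add: H1p_def H1_def)
  then show ?case using H1p_shuffle[OF Suc] by simp
qed

lemma Lp_e1pow: "Lp (e1pow r) = LWF [E1] ^ r"
proof (induction r)
  case 0 then show ?case by (simp add: LWF_def)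
next
  case (Suc r)
  have "Lp [(1, [E1])] = LWF [E1]" by simp
  then show ?case using Lp_shuffle[OF H1p_e1pow[of r], of "[(1,[E1])]"] Suc
    by (simp add: H1p_def H1_def algebra_simps)
qed

fun hr :: "nat list \<Rightarrow> nat \<Rightarrow> real" where
  "hr [] N = 1"
| "hr (k # ks) N = (\<Sum>m\<in>{1..N}. hr ks (m - 1) / real m ^ k)"

lemma hsum_hr: "hsum ks N = of_real (hr ks N)"
  by (induction ks arbitrary: N) auto

lemma hr_nonneg: "0 \<le> hr ks N"
  by (induction ks arbitrary: N) (auto intro!: sum_nonneg divide_nonneg_nonneg)

lemma hr_Suc: "hr (k#ks) (Suc N) = hr (k#ks) N + hr ks N / real (Suc N) ^ k"
  by simp

lemma hr_mono_Suc: "hr ks N \<le> hr ks (Suc N)"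
  by (cases ks) (auto simp del: hr.simps(2) simp: hr_Suc hr_nonneg)

lemma pow_add_ge: "0 \<le> x \<Longrightarrow> 0 \<le> y \<Longrightarrow> x ^ Suc d + x ^ d * y \<le> (x + y :: real) ^ Suc d"
proof -
  assume x: "0 \<le> x" and y: "0 \<le> y"
  have "x ^ d \<le> (x + y) ^ d" using x y by (intro power_mono) auto
  then have "x ^ d * (x + y) \<le> (x + y) ^ d * (x + y)" using x y by (intro mult_right_mono) auto
  then show ?thesis by (simp add: algebra_simps)
qed

lemma hr_harm:
  assumes "\<forall>x\<in>set ks. 1 \<le> x"
  shows "hr ks N \<le> harm N ^ length ks"
  using assms
proof (induction ks arbitrary: N)
  case Nil then show ?case by simp
next
  case (Cons k ks)
  have k: "1 \<le> k" using Cons.prems by simp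
  have IH: "hr ks N \<le> harm N ^ length ks" for N using Cons by simp
  show ?case
  proof (induction N)
    case 0 then show ?case by (simp add: harm_def)
  next
    case (Suc N)
    have hn: "0 \<le> (harm N :: real)" by (rule harm_nonneg)
    have "hr ks N / real (Suc N) ^ k \<le> harm N ^ length ks / real (Suc N)"
    proof -
      have "hr ks N / real (Suc N) ^ k \<le> hr ks N / real (Suc N)"
        using k hr_nonneg[of ks N]
        by (intro divide_left_mono) (auto simp del: of_nat_Suc intro!: self_le_power mult_pos_pos)
      also have "\<dots> \<le> harm N ^ length ks / real (Suc N)"
        using IH[of N] by (intro divide_right_mono) auto
      finally show ?thesis .
    qed
    then have "hr (k#ks) (Suc N) \<le> harm N ^ Suc (length ks) + harm N ^ length ks * inverse (real (Suc N))"
    proof -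
      have a: "hr (k#ks) N \<le> harm N ^ Suc (length ks)" using Suc.IH by simp
      show ?thesis unfolding hr_Suc
        by (rule add_mono[OF a]) (use \<open>hr ks N / real (Suc N) ^ k \<le> _\<close> in \<open>simp add: divide_inverse\<close>)
    qed
    also have "\<dots> \<le> (harm N + inverse (real (Suc N))) ^ Suc (length ks)"
      by (rule pow_add_ge) (use hn in auto)
    also have "\<dots> = harm (Suc N) ^ length (k#ks)"
      by (simp add: harm_Suc)
    finally show ?case .
  qed
qed

lemma harm_le_ln: "harm N \<le> 1 + ln (real N + 1)"
proof (cases "N = 0")
  case True then show ?thesis by (simp add: harm_def)
next
  case False
  have "harm N - ln (real N) \<le> harm 1 - ln (real 1 :: real)"
    using euler_mascheroni_sequence_decreasing[of 1 N] False by simp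
  also have "\<dots> = 1" by (simp add: harm_def)
  finally have "harm N \<le> 1 + ln (real N)" by simp
  also have "ln (real N) \<le> ln (real N + 1)" using False by simp
  finally show ?thesis by simp
qed

lemma ln_pow_bound:
  fixes x :: real
  assumes "1 \<le> x"
  shows "(1 + ln x) ^ d \<le> (1 + 2 * real d) ^ d * x powr (1/2)"
proof (cases "d = 0")
  case True then show ?thesis using assms by (simp add: ge_one_powr_ge_zero)
next
  case False
  define y where "y = x powr (1 / (2 * real d))"
  have y1: "1 \<le> y" unfolding y_def using assms False by (simp add: ge_one_powr_ge_zero)
  have "ln x = 2 * real d * ln y" unfolding y_def using assms False by (simp add: ln_powr)
  also have "\<dots> \<le> 2 * real d * y" using y1 by (intro mult_left_mono ln_bound) auto
  finally have "1 + ln x \<le> (1 + 2 * real d) * y" using y1 by (simp add: algebra_simps)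
  then have "(1 + ln x) ^ d \<le> ((1 + 2 * real d) * y) ^ d"
    using assms by (intro power_mono) auto
  also have "\<dots> = (1 + 2 * real d) ^ d * y ^ d" by (simp add: power_mult_distrib)
  also have "y ^ d = x powr (1/2)"
    unfolding y_def using assms False by (simp add: powr_realpow[symmetric] powr_powr)
  finally show ?thesis .
qed

definition KK :: "nat \<Rightarrow> real" where "KK d = (1 + 2 * real d) ^ d"

lemma KK_pos: "0 < KK d" by (simp add: KK_def)

lemma KK_mono: "d \<le> d' \<Longrightarrow> KK d \<le> KK d'"
proof -
  assume "d \<le> d'"
  then have "(1 + 2 * real d) ^ d \<le> (1 + 2 * real d') ^ d" by (intro power_mono) auto
  also have "\<dots> \<le> (1 + 2 * real d') ^ d'" using \<open>d \<le> d'\<close> by (intro power_increasing) auto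
  finally show ?thesis by (simp add: KK_def)
qed

lemma hr_bound:
  assumes "\<forall>x\<in>set ks. 1 \<le> x"
  shows "hr ks N \<le> KK (length ks) * (real N + 1) powr (1/2)"
proof -
  have "hr ks N \<le> harm N ^ length ks" by (rule hr_harm[OF assms])
  also have "\<dots> \<le> (1 + ln (real N + 1)) ^ length ks"
    by (intro power_mono harm_le_ln harm_nonneg)
  also have "\<dots> \<le> KK (length ks) * (real N + 1) powr (1/2)"
    unfolding KK_def by (rule ln_pow_bound) simp
  finally show ?thesis .
qed

definition ac :: "nat list \<Rightarrow> nat \<Rightarrow> real" where
  "ac ks m = hr (tl (rev ks)) m / real (Suc m) ^ last ks"

lemma cf_ac: "cf ks m = of_real (ac ks m)"
  by (simp add: cf_def ac_def hsum_hr)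

lemma pow_diff_le:
  fixes x y :: real
  assumes "0 \<le> y" "y \<le> x" "x \<le> 1"
  shows "x ^ s - y ^ s \<le> real s * (x - y)"
proof (induction s)
  case 0 then show ?case by simp
next
  case (Suc s)
  have "x ^ Suc s - y ^ Suc s = x * (x ^ s - y ^ s) + y ^ s * (x - y)"
    by (simp add: algebra_simps)
  also have "\<dots> \<le> 1 * (real s * (x - y)) + 1 * (x - y)"
  proof (intro add_mono mult_mono)
    show "x ^ s - y ^ s \<le> real s * (x - y)" by (rule Suc.IH)
    show "y ^ s \<le> 1" using assms by (intro power_le_one) auto
    show "0 \<le> x ^ s - y ^ s" using assms by (simp add: power_mono)
  qed (use assms in auto)
  finally show ?case by (simp add: algebra_simps)
qed

lemma powr_half_div:
  fixes X :: real
  assumes "0 < X"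
  shows "X powr (1/2) / X = X powr (-1/2)" "X powr (1/2) / X ^ 2 = X powr (-3/2)"
proof -
  have "X powr (1/2) / X = X powr (1/2) / X powr 1" using assms by simp
  also have "\<dots> = X powr (1/2 - 1)" by (rule powr_diff[symmetric])
  also have "(1/2 - 1 :: real) = -1/2" by simp
  finally show "X powr (1/2) / X = X powr (-1/2)" .
  have "X powr (1/2) / X ^ 2 = X powr (1/2) / X powr 2" using assms by (simp add: powr_realpow)
  also have "\<dots> = X powr (1/2 - 2)" by (rule powr_diff[symmetric])
  also have "(1/2 - 2 :: real) = -3/2" by simp
  finally show "X powr (1/2) / X ^ 2 = X powr (-3/2)" .
qed

lemma Suc_le_pow: "1 \<le> s \<Longrightarrow> real m + 1 \<le> real (Suc m) ^ s"
  using self_le_power[of "real m + 1" s] by (simp add: add.commute)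

locale goodks =
  fixes ks :: "nat list"
  assumes ne: "ks \<noteq> []" and pos: "\<forall>x\<in>set ks. 1 \<le> x"
begin

definition t where "t = tl (rev ks)"
definition s where "s = last ks"

lemma s1: "1 \<le> s"
  using pos ne unfolding s_def by simp

lemma tpos: "\<forall>x\<in>set t. 1 \<le> x"
  using pos unfolding t_def by (metis list.set_sel(2) rev.simps(1) set_rev tl_Nil)

lemma ac_eq: "ac ks m = hr t m / real (Suc m) ^ s"
  by (simp add: ac_def t_def s_def)

lemma ac_nonneg: "0 \<le> ac ks m"
  by (simp add: ac_eq hr_nonneg)

lemma ac_bound: "ac ks m \<le> KK (length t) * (real m + 1) powr (-1/2)"
proof -
  have X: "0 < real m + 1" by simp
  have "ac ks m \<le> hr t m / (real m + 1)"
    unfolding ac_eq using s1 hr_nonneg[of t m] Suc_le_pow[OF s1, of m]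
    by (intro divide_left_mono) auto
  also have "\<dots> \<le> KK (length t) * (real m + 1) powr (1/2) / (real m + 1)"
    by (intro divide_right_mono hr_bound tpos) auto
  also have "\<dots> = KK (length t) * (real m + 1) powr (-1/2)"
    using powr_half_div(1)[OF X] by (metis times_divide_eq_right)
  finally show ?thesis .
qed

lemma ac_tendsto: "ac ks \<longlonglongrightarrow> 0"
proof (rule tendsto_sandwich[of "\<lambda>_. 0" _ _ "\<lambda>m. KK (length t) * (real m + 1) powr (-1/2)"])
  show "\<forall>\<^sub>F n in sequentially. 0 \<le> ac ks n" by (simp add: ac_nonneg)
  show "\<forall>\<^sub>F n in sequentially. ac ks n \<le> KK (length t) * (real n + 1) powr (-1/2)"
    by (intro always_eventually allI ac_bound)
  have "(\<lambda>m. (real m + 1) powr (-1/2)) \<longlonglongrightarrow> 0"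
  proof (rule tendsto_neg_powr)
    show "filterlim (\<lambda>m. real m + 1) at_top sequentially"
      by (rule filterlim_at_top_mono[OF filterlim_real_sequentially]) auto
  qed auto
  then show "(\<lambda>m. KK (length t) * (real m + 1) powr (-1/2)) \<longlonglongrightarrow> 0"
    by (auto intro: tendsto_mult_right_zero)
qed simp

lemma ac_diff_bound:
  "\<bar>ac ks (Suc m) - ac ks m\<bar> \<le> (KK (length t) + KK (length t) * real s) * (real m + 1) powr (-3/2)"
proof -
  define H where "H = hr t"
  define X where "X = real m + 1"
  have X: "0 < X" by (simp add: X_def)
  have HS: "0 \<le> H (Suc m) - H m" unfolding H_def by (simp add: hr_mono_Suc)
  have dH: "H (Suc m) - H m \<le> KK (length t) * X powr (1/2) / X"
  proof (cases t)
    case Nil then show ?thesis using X by (simp add: H_def KK_def)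
  next
    case (Cons k' t')
    have k': "1 \<le> k'" and t'p: "\<forall>x\<in>set t'. 1 \<le> x" using tpos Cons by auto
    have "H (Suc m) - H m = hr t' m / real (Suc m) ^ k'" unfolding H_def Cons by simp
    also have "\<dots> \<le> hr t' m / X"
      unfolding X_def using k' hr_nonneg[of t' m] Suc_le_pow[OF k', of m]
      by (intro divide_left_mono) auto
    also have "\<dots> \<le> KK (length t') * X powr (1/2) / X"
      unfolding X_def by (intro divide_right_mono hr_bound t'p) auto
    also have "\<dots> \<le> KK (length t) * X powr (1/2) / X"
      using X KK_mono[of "length t'" "length t"] Cons
      by (intro divide_right_mono mult_right_mono) auto
    finally show ?thesis .
  qed
  have e: "ac ks (Suc m) - ac ks m = (H (Suc m) - H m) / real (Suc (Suc m)) ^ s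
            + H m * (1 / real (Suc (Suc m)) ^ s - 1 / real (Suc m) ^ s)"
    unfolding ac_eq H_def by (simp add: field_simps)
  have "\<bar>ac ks (Suc m) - ac ks m\<bar> \<le> \<bar>(H (Suc m) - H m) / real (Suc (Suc m)) ^ s\<bar>
            + \<bar>H m * (1 / real (Suc (Suc m)) ^ s - 1 / real (Suc m) ^ s)\<bar>"
    unfolding e by (rule abs_triangle_ineq)
  also have "\<dots> \<le> KK (length t) * X powr (-3/2) + KK (length t) * real s * X powr (-3/2)"
  proof (rule add_mono)
    have "\<bar>(H (Suc m) - H m) / real (Suc (Suc m)) ^ s\<bar> = (H (Suc m) - H m) / real (Suc (Suc m)) ^ s"
      using HS by simp
    also have "\<dots> \<le> (H (Suc m) - H m) / X"
      unfolding X_def using s1 HS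
      by (intro divide_left_mono) (auto intro!: order.trans[OF _ self_le_power] mult_pos_pos)
    also have "\<dots> \<le> KK (length t) * X powr (1/2) / X / X"
      using dH X by (intro divide_right_mono) auto
    also have "\<dots> = KK (length t) * X powr (-3/2)"
      using powr_half_div(2)[OF X] by (metis divide_divide_eq_left power2_eq_square times_divide_eq_right)
    finally show "\<bar>(H (Suc m) - H m) / real (Suc (Suc m)) ^ s\<bar> \<le> KK (length t) * X powr (-3/2)" .
  next
    define x where "x = 1 / X"
    define y where "y = 1 / (X + 1)"
    have xy: "0 \<le> y" "y \<le> x" "x \<le> 1" unfolding x_def y_def X_def by (auto simp: field_simps)
    have "1 / real (Suc m) ^ s - 1 / real (Suc (Suc m)) ^ s = x ^ s - y ^ s"
      unfolding x_def y_def X_def by (simp add: power_one_over add.commute)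
    also have "\<dots> \<le> real s * (x - y)" by (rule pow_diff_le[OF xy])
    also have "\<dots> \<le> real s / X ^ 2"
    proof -
      have "x - y = 1 / (X * (X + 1))" unfolding x_def y_def using X by (simp add: field_simps)
      also have "\<dots> \<le> 1 / X ^ 2" using X by (intro divide_left_mono) (auto simp: power2_eq_square)
      finally show ?thesis by (simp add: divide_inverse mult_left_mono)
    qed
    finally have d: "1 / real (Suc m) ^ s - 1 / real (Suc (Suc m)) ^ s \<le> real s / X ^ 2" .
    have d0: "0 \<le> 1 / real (Suc m) ^ s - 1 / real (Suc (Suc m)) ^ s"
      by (simp add: frac_le power_mono del: of_nat_Suc)
    have "\<bar>H m * (1 / real (Suc (Suc m)) ^ s - 1 / real (Suc m) ^ s)\<bar>
          = H m * (1 / real (Suc m) ^ s - 1 / real (Suc (Suc m)) ^ s)"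
      using d0 hr_nonneg[of t m] unfolding H_def by (simp add: abs_mult)
    also have "\<dots> \<le> (KK (length t) * X powr (1/2)) * (real s / X ^ 2)"
      using d d0 unfolding H_def X_def
      by (intro mult_mono hr_bound tpos) (auto intro!: mult_nonneg_nonneg simp: KK_def)
    also have "\<dots> = KK (length t) * real s * (X powr (1/2) / X ^ 2)"
      by (simp add: field_simps)
    also have "\<dots> = KK (length t) * real s * X powr (-3/2)"
      using powr_half_div(2)[OF X] by simp
    finally show "\<bar>H m * (1 / real (Suc (Suc m)) ^ s - 1 / real (Suc m) ^ s)\<bar> \<le> KK (length t) * real s * X powr (-3/2)" .
  qed
  finally show ?thesis unfolding X_def by (simp add: algebra_simps)
qed

lemma ac_bv: "summable (\<lambda>m. \<bar>ac ks (Suc m) - ac ks m\<bar>)"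
proof -
  have "summable (\<lambda>n. real n powr (-3/2))" by (simp add: summable_real_powr_iff)
  then have "summable (\<lambda>n. real (Suc n) powr (-3/2))" by (subst summable_Suc_iff)
  then have "summable (\<lambda>n. (KK (length t) + KK (length t) * real s) * (real n + 1) powr (-3/2))"
    by (intro summable_mult) (simp add: add.commute)
  then show ?thesis
    by (rule summable_comparison_test'[where N=0]) (use ac_diff_bound in simp)
qed

end

lemma norm_le_coef: "norm (z::complex) \<le> 1 \<Longrightarrow> norm (complex_of_real c * z ^ k) \<le> \<bar>c\<bar>"
proof -
  assume z: "norm z \<le> 1"
  have "norm (z ^ k) \<le> 1" unfolding norm_power using z by (intro power_le_one) auto
  then show ?thesis by (simp add: norm_mult mult_left_le)
qed

locale bvseq =
  fixes a :: "nat \<Rightarrow> real"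
  assumes lim: "a \<longlonglongrightarrow> 0" and bv: "summable (\<lambda>m. \<bar>a (Suc m) - a m\<bar>)"
begin

definition dd where "dd m = (if m = 0 then a 0 else a m - a (m - 1))"
definition G where "G z = (\<Sum>m. complex_of_real (dd m) * z ^ Suc m)"

lemma dd_summable: "summable (\<lambda>m. \<bar>dd m\<bar>)"
proof -
  have "summable (\<lambda>m. \<bar>dd (Suc m)\<bar>)" using bv by (simp add: dd_def)
  then show ?thesis by (subst (asm) summable_Suc_iff)
qed

lemma partial:
  "(1 - z) * (\<Sum>m<Suc N. complex_of_real (a m) * z ^ Suc m)
     = (\<Sum>m<Suc N. complex_of_real (dd m) * z ^ Suc m) - complex_of_real (a N) * z ^ (N + 2)"
proof (induction N)
  case 0 then show ?case by (simp add: dd_def algebra_simps power2_eq_square)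
next
  case (Suc N)
  have "(1 - z) * (\<Sum>m<Suc (Suc N). complex_of_real (a m) * z ^ Suc m)
      = (1 - z) * (\<Sum>m<Suc N. complex_of_real (a m) * z ^ Suc m) + (1 - z) * (complex_of_real (a (Suc N)) * z ^ (N + 2))"
    by (simp add: algebra_simps)
  also have "\<dots> = (\<Sum>m<Suc N. complex_of_real (dd m) * z ^ Suc m) - complex_of_real (a N) * z ^ (N + 2)
      + (1 - z) * (complex_of_real (a (Suc N)) * z ^ (N + 2))"
    using Suc by simp
  also have "\<dots> = (\<Sum>m<Suc (Suc N). complex_of_real (dd m) * z ^ Suc m) - complex_of_real (a (Suc N)) * z ^ (Suc N + 2)"
    by (simp add: dd_def algebra_simps)
  finally show ?case .
qed

lemma summable_dd: "norm z \<le> 1 \<Longrightarrow> summable (\<lambda>m. complex_of_real (dd m) * z ^ Suc m)"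
  by (rule summable_comparison_test'[OF dd_summable, where N=0]) (simp add: norm_le_coef del: power_Suc)

lemma sums_a:
  assumes "norm z \<le> 1" "z \<noteq> 1"
  shows "(\<lambda>m. complex_of_real (a m) * z ^ Suc m) sums (G z / (1 - z))"
proof -
  have nz: "1 - z \<noteq> 0" using assms by simp
  have D: "(\<lambda>N. \<Sum>m<Suc N. complex_of_real (dd m) * z ^ Suc m) \<longlonglongrightarrow> G z"
    unfolding G_def using summable_LIMSEQ[OF summable_dd[OF assms(1)]]
    by (rule LIMSEQ_Suc)
  have A: "(\<lambda>N. complex_of_real (a N) * z ^ (N + 2)) \<longlonglongrightarrow> 0"
  proof (rule tendsto_norm_zero_cancel, rule tendsto_sandwich[of "\<lambda>_. 0" _ _ "\<lambda>N. \<bar>a N\<bar>"])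
    show "\<forall>\<^sub>F n in sequentially. norm (complex_of_real (a n) * z ^ (n + 2)) \<le> \<bar>a n\<bar>"
      using assms(1) by (simp add: norm_le_coef del: power_Suc)
    show "(\<lambda>N. \<bar>a N\<bar>) \<longlonglongrightarrow> 0" using tendsto_rabs_zero[OF lim] .
  qed auto
  have "(\<lambda>N. ((\<Sum>m<Suc N. complex_of_real (dd m) * z ^ Suc m) - complex_of_real (a N) * z ^ (N + 2)) / (1 - z))
          \<longlonglongrightarrow> (G z - 0) / (1 - z)"
    by (intro tendsto_intros D A nz)
  moreover have "(\<Sum>m<Suc N. complex_of_real (a m) * z ^ Suc m) =
     ((\<Sum>m<Suc N. complex_of_real (dd m) * z ^ Suc m) - complex_of_real (a N) * z ^ (N + 2)) / (1 - z)" for N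
    using partial[of z N] nz by (metis nonzero_mult_div_cancel_left)
  ultimately have "(\<lambda>N. \<Sum>m<Suc N. complex_of_real (a m) * z ^ Suc m) \<longlonglongrightarrow> G z / (1 - z)"
    by simp
  then show ?thesis unfolding sums_def by (rule LIMSEQ_imp_Suc)
qed

lemma G_cont: "continuous_on (cball 0 1) G"
proof -
  have u: "uniform_limit (cball 0 1) (\<lambda>n z. \<Sum>i<n. complex_of_real (dd i) * z ^ Suc i)
             (\<lambda>z. suminf (\<lambda>i. complex_of_real (dd i) * z ^ Suc i)) sequentially"
    by (rule Weierstrass_m_test[OF _ dd_summable]) (simp add: norm_le_coef del: power_Suc)
  have "continuous_on (cball 0 1) (\<lambda>z. suminf (\<lambda>i. complex_of_real (dd i) * z ^ Suc i))"
    by (rule uniform_limit_theorem[OF _ u]) (auto intro!: always_eventually continuous_intros)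
  then show ?thesis unfolding G_def[abs_def] .
qed

end

definition Dbar :: "complex set" where "Dbar = cball 0 1 - {1}"

lemma Dbar_iff: "z \<in> Dbar \<longleftrightarrow> norm z \<le> 1 \<and> z \<noteq> 1"
  by (auto simp: Dbar_def)

context goodks
begin

lemma bvseq: "bvseq (ac ks)"
  by unfold_locales (rule ac_tendsto, rule ac_bv)

lemma Li_eq: "Li ks z = (\<Sum>m. complex_of_real (ac ks m) * z ^ Suc m)"
  unfolding Li_def using ne by (simp add: ac_def hsum_hr field_simps)

lemma Li_sums: "z \<in> Dbar \<Longrightarrow> (\<lambda>m. complex_of_real (ac ks m) * z ^ Suc m) sums Li ks z"
  using bvseq.sums_a[OF bvseq, of z] unfolding Dbar_iff Li_eq
  by (metis sums_unique)

lemma Li_G: "z \<in> Dbar \<Longrightarrow> Li ks z = bvseq.G (ac ks) z / (1 - z)"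
  using bvseq.sums_a[OF bvseq, of z] Li_sums[of z] unfolding Dbar_iff
  by (metis sums_unique2)

lemma Li_cont: "continuous_on Dbar (Li ks)"
proof -
  have "continuous_on Dbar (\<lambda>z. bvseq.G (ac ks) z / (1 - z))"
    by (intro continuous_intros continuous_on_subset[OF bvseq.G_cont[OF bvseq]])
       (auto simp: Dbar_def)
  then show ?thesis using Li_G by (metis (mono_tags, lifting) continuous_on_cong)
qed

lemma LiF_sums: "z \<in> Dbar \<Longrightarrow> (\<lambda>n. LiF ks $ n * z ^ n) sums Li ks z"
proof -
  assume z: "z \<in> Dbar"
  have "(\<lambda>n. LiF ks $ Suc n * z ^ Suc n) sums Li ks z"
    using Li_sums[OF z] by (simp add: LiF_nth ne cf_ac)
  then show ?thesis by (subst (asm) sums_Suc_iff) (simp add: LiF_nth ne)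
qed

lemma LiF_eval: "z \<in> Dbar \<Longrightarrow> eval_fps (LiF ks) z = Li ks z"
  unfolding eval_fps_def using LiF_sums by (metis sums_unique)

lemma LiF_radius: "1 \<le> fps_conv_radius (LiF ks)"
proof -
  have "(-1::complex) \<in> Dbar" by (simp add: Dbar_iff)
  then have "summable (\<lambda>n. LiF ks $ n * (-1::complex) ^ n)" using LiF_sums sums_summable by blast
  then have "norm (-1::complex) \<le> fps_conv_radius (LiF ks)"
    unfolding fps_conv_radius_def by (rule conv_radius_geI)
  then show ?thesis by (simp add: one_ereal_def)
qed

end

lemma goodks_word: "w \<noteq> [] \<Longrightarrow> hd w = E1 \<Longrightarrow> goodks (word_idx w)"
  using word_idx_nonempty[OF H1_hd, of w] word_idx_pos[of _ w] by unfold_locales auto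

lemma Lword_eval: "H1 w \<Longrightarrow> z \<in> Dbar \<Longrightarrow> eval_fps (LWF w) z = Lword w z"
  using goodks.LiF_eval[OF goodks_word] by (auto simp: H1_def LWF_def Lword_def)

lemma Lword_cont: "H1 w \<Longrightarrow> continuous_on Dbar (Lword w)"
proof -
  assume "H1 w"
  then consider "w = []" | "w \<noteq> []" "hd w = E1" by (auto simp: H1_def)
  then show ?thesis
  proof cases
    case 1 then show ?thesis by (simp add: Lword_def)
  next
    case 2
    have "continuous_on Dbar (Li (word_idx w))" by (rule goodks.Li_cont[OF goodks_word[OF 2]])
    then show ?thesis using 2 by (simp add: Lword_def)
  qed
qed

lemma LWF_radius: "H1 w \<Longrightarrow> 1 \<le> fps_conv_radius (LWF w)"
  using goodks.LiF_radius[OF goodks_word] by (auto simp: H1_def LWF_def)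

lemma norm_exp_it: "norm (exp (\<i> * complex_of_real t)) = 1"
  by (simp add: norm_exp_eq_Re)

lemma exp_circle_Dbar:
  assumes "0 < \<sigma>" "\<sigma> < 2 * pi"
  shows "exp (\<i> * complex_of_real \<sigma>) \<in> Dbar"
proof -
  have "exp (\<i> * complex_of_real \<sigma>) \<noteq> 1"
  proof
    assume "exp (\<i> * complex_of_real \<sigma>) = 1"
    then obtain n :: int where n: "\<sigma> = of_int (2 * n) * pi" by (auto simp: exp_eq_1)
    have "0 < of_int n * (2 * pi)" using assms(1) n by (simp add: algebra_simps)
    then have "0 < n" using pi_gt_zero by (simp add: zero_less_mult_iff)
    have "of_int n * (2 * pi) < 1 * (2 * pi)" using assms(2) n by (simp add: algebra_simps)
    then have "n < 1" using pi_gt_zero by (simp only: mult_less_cancel_right) simp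
    with \<open>0 < n\<close> show False by simp
  qed
  then show ?thesis by (simp add: Dbar_iff norm_exp_it)
qed

lemma circle_deriv:
  fixes F :: "complex fps" and Lw Phi :: "complex \<Rightarrow> complex" and \<sigma> :: real
  assumes rad: "1 \<le> fps_conv_radius F"
    and eq: "\<And>z. norm z < 1 \<Longrightarrow> eval_fps F z = Lw z"
    and cont: "continuous_on Dbar Lw"
    and dcont: "continuous_on Dbar Phi"
    and deq: "\<And>z. norm z < 1 \<Longrightarrow> \<i> * z * eval_fps (fps_deriv F) z = Phi z"
    and sig: "0 < \<sigma>" "\<sigma> < 2 * pi"
  shows "((\<lambda>t. Lw (exp (\<i> * complex_of_real t))) has_vector_derivative Phi (exp (\<i> * complex_of_real \<sigma>))) (at \<sigma>)"
proof -
  define E where "E t = exp (\<i> * complex_of_real t)" for t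
  have normE: "norm (E t) = 1" for t by (simp add: E_def norm_exp_it)
  have e0: "E \<sigma> \<in> Dbar" unfolding E_def by (rule exp_circle_Dbar[OF sig])
  define \<delta> where "\<delta> = norm (1 - E \<sigma>)"
  have \<delta>: "0 < \<delta>" using e0 by (simp add: \<delta>_def Dbar_iff)
  have Econt: "isCont E \<sigma>" unfolding E_def by (intro continuous_intros)
  obtain \<epsilon> where \<epsilon>: "\<epsilon> > 0" "\<And>t. dist t \<sigma> < \<epsilon> \<Longrightarrow> dist (E t) (E \<sigma>) < \<delta> / 4"
    using Econt[unfolded continuous_at_eps_delta] \<delta> by (metis divide_pos_pos zero_less_numeral)
  define K where "K = cball (0::complex) 1 \<inter> {z. \<delta> / 2 \<le> norm (1 - z)}"
  have Kc: "compact K" unfolding K_def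
    by (intro compact_Int_closed compact_cball closed_Collect_le continuous_intros)
  have KD: "K \<subseteq> Dbar" using \<delta> by (auto simp: K_def Dbar_iff)
  have uc: "uniformly_continuous_on K Phi"
    by (rule compact_uniformly_continuous[OF continuous_on_subset[OF dcont KD] Kc])
  define c where "c = min (\<delta> / 4) (1 / 2)"
  have c: "0 < c" "c \<le> \<delta> / 4" "c \<le> 1/2" using \<delta> by (auto simp: c_def)
  define r where "r n = 1 - c / real (Suc n)" for n
  have r1: "1 - c \<le> r n" for n
    unfolding r_def using c by (simp add: field_simps del: of_nat_Suc)
  have r2: "r n < 1" for n unfolding r_def using c by simp
  have r0: "0 < r n" for n using r1[of n] c by simp
  have rlim: "r \<longlonglongrightarrow> 1"
  proof -
    have "(\<lambda>n. c * inverse (real (Suc n))) \<longlonglongrightarrow> 0"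
      by (rule tendsto_mult_right_zero[OF LIMSEQ_inverse_real_of_nat])
    then have "(\<lambda>n. 1 - c / real (Suc n)) \<longlonglongrightarrow> 1 - 0"
      by (intro tendsto_intros) (simp add: divide_inverse)
    then show ?thesis by (simp add: r_def[abs_def])
  qed
  define S where "S = ball \<sigma> \<epsilon>"
  have inK: "complex_of_real \<rho> * E t \<in> K" if t: "t \<in> S" and \<rho>: "1 - c \<le> \<rho>" "\<rho> \<le> 1" for t \<rho>
  proof -
    have \<rho>0: "0 \<le> \<rho>" using \<rho> c by simp
    have n1: "norm (complex_of_real \<rho> * E t) \<le> 1" using \<rho> \<rho>0 by (simp add: norm_mult normE)
    have "dist t \<sigma> < \<epsilon>" using t by (simp add: S_def dist_commute)
    then have "dist (E t) (E \<sigma>) < \<delta> / 4" by (rule \<epsilon>(2))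
    then have a: "norm (E \<sigma> - E t) \<le> \<delta> / 4" by (simp add: dist_norm norm_minus_commute)
    have b: "norm (E t - complex_of_real \<rho> * E t) \<le> \<delta> / 4"
    proof -
      have "E t - complex_of_real \<rho> * E t = complex_of_real (1 - \<rho>) * E t" by (simp add: algebra_simps)
      then have "norm (E t - complex_of_real \<rho> * E t) = norm (complex_of_real (1 - \<rho>))"
        by (simp only: norm_mult normE)
      moreover have "norm (complex_of_real (1 - \<rho>)) = 1 - \<rho>" using \<rho> by (simp only: norm_of_real)
      ultimately have "norm (E t - complex_of_real \<rho> * E t) = 1 - \<rho>" by simp
      then show ?thesis using \<rho> c by simp
    qed
    have "1 - E \<sigma> = ((1 - complex_of_real \<rho> * E t) - (E \<sigma> - E t)) - (E t - complex_of_real \<rho> * E t)"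
      by simp
    then have "norm (1 - E \<sigma>) \<le> norm ((1 - complex_of_real \<rho> * E t) - (E \<sigma> - E t)) + norm (E t - complex_of_real \<rho> * E t)"
      by (metis norm_triangle_ineq4)
    also have "\<dots> \<le> norm (1 - complex_of_real \<rho> * E t) + norm (E \<sigma> - E t) + norm (E t - complex_of_real \<rho> * E t)"
      using norm_triangle_ineq4 by (intro add_right_mono)
    finally have "norm (1 - E \<sigma>) \<le> norm (1 - complex_of_real \<rho> * E t) + norm (E \<sigma> - E t) + norm (E t - complex_of_real \<rho> * E t)" .
    then have "\<delta> / 2 \<le> norm (1 - complex_of_real \<rho> * E t)" using a b by (simp add: \<delta>_def)
    then show ?thesis using n1 by (simp add: K_def)
  qed
  have EK: "E t \<in> K" if "t \<in> S" for t using inK[OF that, of 1] c by simp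
  define f where "f n t = eval_fps F (complex_of_real (r n) * E t)" for n t
  have fder: "(f n has_vector_derivative Phi (complex_of_real (r n) * E t)) (at t within S)" for n t
  proof -
    define z where "z = complex_of_real (r n) * E t"
    have nz: "norm z < 1" using r0[of n] r2[of n] by (simp add: z_def norm_mult normE)
    have nzr: "norm z < fps_conv_radius F" using nz rad
      by (metis ereal_less(3) less_le_trans one_ereal_def)
    define g where "g x = complex_of_real (r n) * exp (\<i> * x)" for x
    have gz: "g (complex_of_real t) = z" by (simp add: g_def z_def E_def)
    have h1: "(eval_fps F has_field_derivative eval_fps (fps_deriv F) z) (at (g (complex_of_real t)))"
      unfolding gz using has_field_derivative_eval_fps[OF nzr, of UNIV] by simp
    have h2: "(g has_field_derivative (complex_of_real (r n) * (exp (\<i> * complex_of_real t) * \<i>))) (at (complex_of_real t))"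
      unfolding g_def by (auto intro!: derivative_eq_intros)
    have hd: "((\<lambda>x. eval_fps F (g x)) has_field_derivative
            eval_fps (fps_deriv F) z * (complex_of_real (r n) * (exp (\<i> * complex_of_real t) * \<i>))) (at (complex_of_real t))"
      by (rule DERIV_chain2[OF h1 h2])
    have "(f n has_vector_derivative eval_fps (fps_deriv F) z * (complex_of_real (r n) * (exp (\<i> * complex_of_real t) * \<i>))) (at t within S)"
      unfolding f_def[abs_def] E_def using has_vector_derivative_real_field[OF hd] by (simp add: g_def)
    moreover have "eval_fps (fps_deriv F) z * (complex_of_real (r n) * (exp (\<i> * complex_of_real t) * \<i>)) = Phi z"
      using deq[OF nz] by (simp add: z_def E_def algebra_simps)
    ultimately show ?thesis by (simp add: z_def)
  qed
  have ulim: "\<forall>\<^sub>F n in sequentially. \<forall>t\<in>S. \<forall>h. norm (h *\<^sub>R Phi (complex_of_real (r n) * E t) - h *\<^sub>R Phi (E t)) \<le> e * norm h"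
    if e: "e > 0" for e
  proof -
    obtain d where d: "d > 0" "\<And>x x'. x \<in> K \<Longrightarrow> x' \<in> K \<Longrightarrow> dist x' x < d \<Longrightarrow> dist (Phi x') (Phi x) < e"
      using uc[unfolded uniformly_continuous_on_def] e by metis
    have "\<forall>\<^sub>F n in sequentially. dist (r n) 1 < d" using rlim d(1) by (rule tendstoD)
    then show ?thesis
    proof (rule eventually_mono)
      fix n assume dn: "dist (r n) 1 < d"
      show "\<forall>t\<in>S. \<forall>h. norm (h *\<^sub>R Phi (complex_of_real (r n) * E t) - h *\<^sub>R Phi (E t)) \<le> e * norm h"
      proof (intro ballI allI)
        fix t h assume t: "t \<in> S"
        have x'K: "complex_of_real (r n) * E t \<in> K" using inK[OF t r1[of n]] r2[of n] by simp
        have "dist (complex_of_real (r n) * E t) (E t) = 1 - r n"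
        proof -
          have "complex_of_real (r n) * E t - E t = complex_of_real (r n - 1) * E t" by (simp add: algebra_simps)
          then have "dist (complex_of_real (r n) * E t) (E t) = norm (complex_of_real (r n - 1))"
            by (simp only: dist_norm norm_mult normE)
          also have "\<dots> = 1 - r n" using r2[of n] by (simp only: norm_of_real)
          finally show ?thesis .
        qed
        also have "\<dots> < d" using dn r2[of n] by (simp add: dist_real_def)
        finally have "dist (Phi (complex_of_real (r n) * E t)) (Phi (E t)) < e"
          by (rule d(2)[OF EK[OF t] x'K])
        then have "norm (Phi (complex_of_real (r n) * E t) - Phi (E t)) \<le> e" by (simp add: dist_norm)
        then have "\<bar>h\<bar> * norm (Phi (complex_of_real (r n) * E t) - Phi (E t)) \<le> \<bar>h\<bar> * e"
          by (intro mult_left_mono) auto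
        then show "norm (h *\<^sub>R Phi (complex_of_real (r n) * E t) - h *\<^sub>R Phi (E t)) \<le> e * norm h"
          by (simp add: scaleR_diff_right[symmetric] mult.commute)
      qed
    qed
  qed
  have flim: "(\<lambda>n. f n t) \<longlonglongrightarrow> Lw (E t)" if t: "t \<in> S" for t
  proof -
    have fe: "f n t = Lw (complex_of_real (r n) * E t)" for n
      using eq[of "complex_of_real (r n) * E t"] r0[of n] r2[of n] by (simp add: f_def norm_mult normE)
    have "(\<lambda>n. complex_of_real (r n) * E t) \<longlonglongrightarrow> complex_of_real 1 * E t"
      by (intro tendsto_intros rlim)
    then have lim1: "(\<lambda>n. complex_of_real (r n) * E t) \<longlonglongrightarrow> E t" by simp
    have "(\<lambda>n. Lw (complex_of_real (r n) * E t)) \<longlonglongrightarrow> Lw (E t)"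
    proof (rule continuous_on_tendsto_compose[OF cont lim1])
      show "E t \<in> Dbar" using KD EK[OF t] by auto
      have "complex_of_real (r n) * E t \<in> Dbar" for n
      proof -
        have "norm (complex_of_real (r n) * E t) < 1" using r0[of n] r2[of n] by (simp add: norm_mult normE)
        then show ?thesis by (auto simp: Dbar_iff)
      qed
      then show "\<forall>\<^sub>F n in sequentially. complex_of_real (r n) * E t \<in> Dbar" by simp
    qed
    then show ?thesis by (simp add: fe)
  qed
  have sS: "\<sigma> \<in> S" using \<epsilon> by (simp add: S_def)
  obtain g where g: "\<forall>t\<in>S. (\<lambda>n. f n t) \<longlonglongrightarrow> g t \<and> (g has_derivative (\<lambda>h. h *\<^sub>R Phi (E t))) (at t within S)"
    using has_derivative_sequence[OF convex_ball[of \<sigma> \<epsilon>, folded S_def], of f "\<lambda>n t h. h *\<^sub>R Phi (complex_of_real (r n) * E t)"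
          "\<lambda>t h. h *\<^sub>R Phi (E t)", OF _ ulim sS flim[OF sS]]
          fder unfolding has_vector_derivative_def by blast
  have gS: "g t = Lw (E t)" if "t \<in> S" for t
    using g that flim[OF that] LIMSEQ_unique by blast
  have "(g has_derivative (\<lambda>h. h *\<^sub>R Phi (E \<sigma>))) (at \<sigma>)"
    using g sS by (simp add: S_def at_within_open[OF _ open_ball])
  then have "((\<lambda>t. Lw (E t)) has_derivative (\<lambda>h. h *\<^sub>R Phi (E \<sigma>))) (at \<sigma>)"
    by (rule has_derivative_transform_within_open[OF _ open_ball[of \<sigma> \<epsilon>]]) (use sS gS in \<open>auto simp: S_def\<close>)
  then show ?thesis unfolding has_vector_derivative_def E_def .
qed

lemma rad_lt: "1 \<le> fps_conv_radius (p1::complex fps) \<Longrightarrow> norm z < 1 \<Longrightarrow> ereal (norm z) < fps_conv_radius p1"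
  by (metis ereal_less(3) less_le_trans one_ereal_def)

lemma rad_add: "1 \<le> fps_conv_radius (p1::complex fps) \<Longrightarrow> 1 \<le> fps_conv_radius p2 \<Longrightarrow> 1 \<le> fps_conv_radius (p1 + p2)"
  using fps_conv_radius_add[of p1 p2] by (metis min.bounded_iff order.trans)

lemma rad_diff: "1 \<le> fps_conv_radius (p1::complex fps) \<Longrightarrow> 1 \<le> fps_conv_radius p2 \<Longrightarrow> 1 \<le> fps_conv_radius (p1 - p2)"
  using fps_conv_radius_diff[of p1 p2] by (metis min.bounded_iff order.trans)

lemma rad_mult: "1 \<le> fps_conv_radius (p1::complex fps) \<Longrightarrow> 1 \<le> fps_conv_radius p2 \<Longrightarrow> 1 \<le> fps_conv_radius (p1 * p2)"
  using fps_conv_radius_mult[of p1 p2] by (metis min.bounded_iff order.trans)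

lemma rad_const: "1 \<le> fps_conv_radius (fps_const c)" by simp

lemma rad_X: "1 \<le> fps_conv_radius (fps_X :: complex fps)" by simp

lemma rad_deriv: "1 \<le> fps_conv_radius (p1::complex fps) \<Longrightarrow> 1 \<le> fps_conv_radius (fps_deriv p1)"
  using fps_conv_radius_deriv[of p1] by (metis order.trans)

definition Om :: "letter \<Rightarrow> complex \<Rightarrow> complex" where
  "Om a z = (case a of E0 \<Rightarrow> 1 | E1 \<Rightarrow> z / (1 - z))"

lemma Om_cont: "continuous_on Dbar (Om a)"
proof (cases a)
  case E0 then show ?thesis by (simp add: Om_def)
next
  case E1
  have "continuous_on Dbar (\<lambda>z. z / (1 - z))"
    by (intro continuous_intros) (auto simp: Dbar_iff)
  then show ?thesis using E1 by (simp add: Om_def)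
qed

lemma H1_snoc: "H1 x \<Longrightarrow> x \<noteq> [] \<or> a = E1 \<Longrightarrow> H1 (x @ [a])"
  by (cases x) (auto simp: H1_def)

lemma disc_deriv:
  assumes x: "H1 x" "x \<noteq> [] \<or> a = E1" and z: "norm z < 1"
  shows "\<i> * z * eval_fps (fps_deriv (LWF (x@[a]))) z = \<i> * Om a z * Lword x z"
proof -
  have Hw: "H1 (x@[a])" by (rule H1_snoc[OF x])
  have rD: "1 \<le> fps_conv_radius (fps_deriv (LWF (x@[a])))" by (rule rad_deriv[OF LWF_radius[OF Hw]])
  have zD: "z \<in> Dbar" using z by (auto simp: Dbar_iff)
  show ?thesis
  proof (cases a)
    case E0
    then have "x \<noteq> []" "hd x = E1" using x by (auto simp: H1_def)
    then have "fps_X * fps_deriv (LWF (x@[a])) = LWF x" using LWF_E0 E0 by simp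
    then have "eval_fps (fps_X * fps_deriv (LWF (x@[a]))) z = Lword x z"
      using Lword_eval[OF x(1) zD] by simp
    moreover have "eval_fps (fps_X * fps_deriv (LWF (x@[a]))) z = z * eval_fps (fps_deriv (LWF (x@[a]))) z"
      by (subst eval_fps_mult) (auto intro: rad_lt[OF rD z])
    ultimately show ?thesis using E0 by (simp add: Om_def)
  next
    case E1
    have "(1 - fps_X) * fps_deriv (LWF (x@[a])) = LWF x" using LWF_E1[OF x(1)] E1 by simp
    then have "eval_fps ((1 - fps_X) * fps_deriv (LWF (x@[a]))) z = Lword x z"
      using Lword_eval[OF x(1) zD] by simp
    moreover have "eval_fps ((1 - fps_X) * fps_deriv (LWF (x@[a]))) z = (1 - z) * eval_fps (fps_deriv (LWF (x@[a]))) z"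
    proof -
      have r1X: "1 \<le> fps_conv_radius (1 - fps_X :: complex fps)" by (rule rad_diff) simp_all
      have "eval_fps ((1 - fps_X) * fps_deriv (LWF (x@[a]))) z = eval_fps (1 - fps_X) z * eval_fps (fps_deriv (LWF (x@[a]))) z"
        by (rule eval_fps_mult[OF rad_lt[OF r1X z] rad_lt[OF rD z]])
      also have "eval_fps (1 - fps_X) z = 1 - z" by (subst eval_fps_diff) auto
      finally show ?thesis .
    qed
    moreover have nz: "1 - z \<noteq> 0" using z by auto
    ultimately have "eval_fps (fps_deriv (LWF (x@[a]))) z = Lword x z / (1 - z)"
      by (metis nonzero_mult_div_cancel_left)
    then show ?thesis using E1 by (simp add: Om_def)
  qed
qed

lemma word_circle_deriv:
  assumes x: "H1 x" "x \<noteq> [] \<or> a = E1" and sig: "0 < \<sigma>" "\<sigma> < 2 * pi"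
  shows "((\<lambda>t. Lword (x@[a]) (exp (\<i> * complex_of_real t))) has_vector_derivative
           (\<i> * Om a (exp (\<i> * complex_of_real \<sigma>)) * Lword x (exp (\<i> * complex_of_real \<sigma>)))) (at \<sigma>)"
proof -
  have Hw: "H1 (x@[a])" by (rule H1_snoc[OF x])
  show ?thesis
  proof (rule circle_deriv[where F = "LWF (x@[a])" and Phi = "\<lambda>z. \<i> * Om a z * Lword x z"])
    show "1 \<le> fps_conv_radius (LWF (x @ [a]))" by (rule LWF_radius[OF Hw])
    show "eval_fps (LWF (x @ [a])) z = Lword (x @ [a]) z" if "norm z < 1" for z
    proof -
      have "z \<in> Dbar" using that by (auto simp: Dbar_iff)
      then show ?thesis by (rule Lword_eval[OF Hw])
    qed
    show "continuous_on Dbar (Lword (x @ [a]))" by (rule Lword_cont[OF Hw])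
    show "continuous_on Dbar (\<lambda>z. \<i> * Om a z * Lword x z)"
      by (intro continuous_intros Om_cont Lword_cont[OF x(1)])
    show "\<i> * z * eval_fps (fps_deriv (LWF (x @ [a]))) z = \<i> * Om a z * Lword x z" if "norm z < 1" for z
      by (rule disc_deriv[OF x that])
  qed (use sig in auto)
qed

lemma L_Nil[simp]: "L [] z = 0" by (simp add: L_def)
lemma L_Cons[simp]: "L ((c,u) # P) z = of_rat c * Lword u z + L P z" by (simp add: L_def)
lemma L_append[simp]: "L (P @ Q) z = L P z + L Q z" by (simp add: L_def)

lemma H1p_Cons[simp]: "H1p ((c,u) # P) \<longleftrightarrow> H1 u \<and> H1p P" by (simp add: H1p_def)

lemma Lp_radius: "H1p P \<Longrightarrow> 1 \<le> fps_conv_radius (Lp P)"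
proof (induction P)
  case Nil then show ?case by simp
next
  case (Cons p P)
  obtain c u where p: "p = (c,u)" by (cases p)
  show ?case using Cons p
    by (auto intro!: rad_add rad_mult LWF_radius)
qed

lemma L_eval: "H1p P \<Longrightarrow> norm z < 1 \<Longrightarrow> L P z = eval_fps (Lp P) z"
proof (induction P)
  case Nil then show ?case by simp
next
  case (Cons p P)
  obtain c u where p: "p = (c,u)" by (cases p)
  have Hu: "H1 u" and HP: "H1p P" using Cons.prems p by auto
  have zD: "z \<in> Dbar" using Cons.prems by (auto simp: Dbar_iff)
  have r1: "1 \<le> fps_conv_radius (fps_const (of_rat c) * LWF u)"
    by (intro rad_mult LWF_radius[OF Hu]) simp
  have "eval_fps (Lp (p # P)) z = eval_fps (fps_const (of_rat c) * LWF u) z + eval_fps (Lp P) z"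
    using p by (simp add: eval_fps_add rad_lt[OF r1 Cons.prems(2)] rad_lt[OF Lp_radius[OF HP] Cons.prems(2)])
  also have "eval_fps (fps_const (of_rat c) * LWF u) z = of_rat c * Lword u z"
    by (subst eval_fps_mult) (auto intro!: rad_lt[OF LWF_radius[OF Hu] Cons.prems(2)] simp: Lword_eval[OF Hu zD])
  finally show ?case using Cons.IH[OF HP Cons.prems(2)] p by simp
qed

lemma L_cont: "H1p P \<Longrightarrow> continuous_on Dbar (L P)"
proof (induction P)
  case Nil then show ?case by (simp add: L_def)
next
  case (Cons p P)
  obtain c u where p: "p = (c,u)" by (cases p)
  have "continuous_on Dbar (\<lambda>z. of_rat c * Lword u z + L P z)"
    using Cons p by (intro continuous_intros Lword_cont) auto
  then show ?case using p by simp
qed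

lemma ext_Dbar:
  fixes g h :: "complex \<Rightarrow> complex"
  assumes "continuous_on Dbar g" "continuous_on Dbar h" "\<And>z. norm z < 1 \<Longrightarrow> g z = h z" "z \<in> Dbar"
  shows "g z = h z"
proof -
  define s where "s n = complex_of_real (1 - 1 / real (Suc (Suc n))) * z" for n
  have nz: "norm z \<le> 1" using assms(4) by (simp add: Dbar_iff)
  have sn: "norm (s n) < 1" for n
  proof -
    have r0: "0 \<le> 1 - 1 / real (Suc (Suc n))" by (simp add: field_simps del: of_nat_Suc)
    have "norm (s n) = \<bar>1 - 1 / real (Suc (Suc n))\<bar> * norm z"
      unfolding s_def by (simp only: norm_mult norm_of_real)
    also have "\<dots> = (1 - 1 / real (Suc (Suc n))) * norm z" using r0 by (simp only: abs_of_nonneg)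
    also have "\<dots> \<le> (1 - 1 / real (Suc (Suc n))) * 1"
      using nz by (intro mult_left_mono) (auto simp del: of_nat_Suc)
    also have "\<dots> < 1" by simp
    finally show ?thesis .
  qed
  have sD: "s n \<in> Dbar" for n using sn[of n] by (auto simp: Dbar_iff)
  have "(\<lambda>n. complex_of_real (1 - 1 / real (Suc (Suc n))) * z) \<longlonglongrightarrow> complex_of_real (1 - 0) * z"
  proof (intro tendsto_intros)
    show "(\<lambda>n. 1 / real (Suc (Suc n))) \<longlonglongrightarrow> 0"
      using LIMSEQ_Suc[OF LIMSEQ_inverse_real_of_nat] by (simp add: divide_inverse del: of_nat_Suc)
  qed
  then have sl: "s \<longlonglongrightarrow> z" by (simp add: s_def[abs_def])
  have "(\<lambda>n. g (s n)) \<longlonglongrightarrow> g z"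
    by (rule continuous_on_tendsto_compose[OF assms(1) sl assms(4)]) (simp add: sD)
  moreover have "(\<lambda>n. h (s n)) \<longlonglongrightarrow> h z"
    by (rule continuous_on_tendsto_compose[OF assms(2) sl assms(4)]) (simp add: sD)
  moreover have "g (s n) = h (s n)" for n using assms(3)[OF sn] .
  ultimately show ?thesis using LIMSEQ_unique by auto
qed

lemma L_shuffle:
  assumes "H1p P" "H1p Q" "z \<in> Dbar"
  shows "L (shuffle P Q) z = L P z * L Q z"
proof (rule ext_Dbar[OF _ _ _ assms(3)])
  show "continuous_on Dbar (L (shuffle P Q))" by (rule L_cont[OF H1p_shuffle[OF assms(1,2)]])
  show "continuous_on Dbar (\<lambda>z. L P z * L Q z)" by (intro continuous_intros L_cont assms)
  fix z :: complex assume z: "norm z < 1"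
  have "L (shuffle P Q) z = eval_fps (Lp P * Lp Q) z"
    using L_eval[OF H1p_shuffle[OF assms(1,2)] z] Lp_shuffle[OF assms(1,2)] by simp
  also have "\<dots> = eval_fps (Lp P) z * eval_fps (Lp Q) z"
    by (rule eval_fps_mult[OF rad_lt[OF Lp_radius[OF assms(1)] z] rad_lt[OF Lp_radius[OF assms(2)] z]])
  finally show "L (shuffle P Q) z = L P z * L Q z" using L_eval[OF assms(1) z] L_eval[OF assms(2) z] by simp
qed

lemma Lword_E1: "Lword [E1] z = Li [1] z"
  by (simp add: Lword_def word_idx_def)

lemma L_e1pow: "z \<in> Dbar \<Longrightarrow> L (e1pow r) z = Li [1] z ^ r"
proof (induction r)
  case 0 then show ?case by (simp add: Lword_def)
next
  case (Suc r)
  have "H1p [(1, [E1])]" by (simp add: H1_def H1p_def)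
  then show ?case using L_shuffle[OF H1p_e1pow[of r] _ Suc.prems, of "[(1,[E1])]"] Suc
    by (simp add: Lword_E1)
qed

definition app0 :: "hpoly \<Rightarrow> hpoly" where
  "app0 P = map (\<lambda>(c, u). (c, u @ [E0])) P"

definition NEp :: "hpoly \<Rightarrow> bool" where
  "NEp P \<longleftrightarrow> (\<forall>(c, u)\<in>set P. u \<noteq> [])"

lemma app0_Cons[simp]: "app0 ((c,u) # P) = (c, u @ [E0]) # app0 P" by (simp add: app0_def)
lemma app0_Nil[simp]: "app0 [] = []" by (simp add: app0_def)
lemma NEp_Cons[simp]: "NEp ((c,u) # P) \<longleftrightarrow> u \<noteq> [] \<and> NEp P" by (simp add: NEp_def)

lemma L_app0_deriv:
  assumes "H1p P" "NEp P" "0 < \<sigma>" "\<sigma> < 2 * pi"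
  shows "((\<lambda>t. L (app0 P) (exp (\<i> * complex_of_real t))) has_vector_derivative
          (\<i> * L P (exp (\<i> * complex_of_real \<sigma>)))) (at \<sigma>)"
  using assms(1,2)
proof (induction P)
  case Nil then show ?case by simp
next
  case (Cons p P)
  obtain c u where p: "p = (c,u)" by (cases p)
  have Hu: "H1 u" "u \<noteq> []" and HP: "H1p P" "NEp P" using Cons.prems p by auto
  have d1: "((\<lambda>t. Lword (u @ [E0]) (exp (\<i> * complex_of_real t))) has_vector_derivative
           (\<i> * Om E0 (exp (\<i> * complex_of_real \<sigma>)) * Lword u (exp (\<i> * complex_of_real \<sigma>)))) (at \<sigma>)"
    by (rule word_circle_deriv) (use Hu assms(3,4) in auto)
  have "((\<lambda>t. of_rat c * Lword (u @ [E0]) (exp (\<i> * complex_of_real t)) + L (app0 P) (exp (\<i> * complex_of_real t)))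
         has_vector_derivative (of_rat c * (\<i> * Om E0 (exp (\<i> * complex_of_real \<sigma>)) * Lword u (exp (\<i> * complex_of_real \<sigma>)))
          + \<i> * L P (exp (\<i> * complex_of_real \<sigma>)))) (at \<sigma>)"
    by (intro has_vector_derivative_add has_vector_derivative_mult_right d1 Cons.IH HP)
  then show ?case using p by (simp add: Om_def algebra_simps)
qed

lemma wjr_Nil[simp]: "wjr [] [] = [(1, [])]"
  by (simp add: wjr_def)

lemma wjr_snoc: "wjr (J @ [t]) (R @ [\<rho>]) =
   map (\<lambda>(c, u). (c, u @ replicate (Suc t) E0)) (shuffle (wjr J R) (e1pow \<rho>))"
  by (simp add: wjr_def)

lemma map_app_rep_Suc: "map (\<lambda>(c, u). (c, u @ replicate (Suc t) E0)) X = app0 (map (\<lambda>(c, u). (c, u @ replicate t E0)) X)"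
  by (induction X) (auto simp: replicate_append_same[symmetric])

lemma wjr_snoc_Suc: "wjr (J @ [Suc t]) (R @ [\<rho>]) = app0 (wjr (J @ [t]) (R @ [\<rho>]))"
  unfolding wjr_snoc by (subst map_app_rep_Suc) simp

lemma map_app_rep_0: "map (\<lambda>(c, u). (c, u @ replicate 0 E0)) X = X"
  by (induction X) auto

lemma wjr_snoc_0: "wjr (J @ [0]) (R @ [\<rho>]) = app0 (shuffle (wjr J R) (e1pow \<rho>))"
  unfolding wjr_snoc by (subst map_app_rep_Suc) (simp add: map_app_rep_0)

lemma e1pow_length: "(c, v) \<in> set (e1pow \<rho>) \<Longrightarrow> length v = \<rho>"
proof (induction \<rho> arbitrary: c v)
  case 0 then show ?case by simp
next
  case (Suc \<rho>)
  then obtain c1 u d1 w where "(c1, u) \<in> set (e1pow \<rho>)" "(d1, w) \<in> set [(1::rat, [E1])]" "v \<in> set (shuf u w)"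
    by (auto simp: shuffle_def)
  then show ?case using Suc.IH shuf_length by fastforce
qed

lemma shuffle_mem: "(e, w) \<in> set (shuffle P Q) \<Longrightarrow> \<exists>c u d v. (c, u) \<in> set P \<and> (d, v) \<in> set Q \<and> w \<in> set (shuf u v)"
  by (auto simp: shuffle_def)

lemma H1_snoc0: "H1 (u @ [E0]) \<Longrightarrow> H1 u \<and> u \<noteq> []"
  by (cases u) (auto simp: H1_def)

lemma H1p_app0D: "H1p (app0 X) \<Longrightarrow> H1p X \<and> NEp X"
proof (induction X)
  case Nil then show ?case by (simp add: H1p_def NEp_def)
next
  case (Cons p X)
  obtain c u where p: "p = (c, u)" by (cases p)
  show ?case using Cons p H1_snoc0[of u] by auto
qed

lemma wjr_props:
  "length J = length R \<Longrightarrow> J \<noteq> [] \<Longrightarrow> 1 \<le> hd R \<Longrightarrow> H1p (wjr J R) \<and> NEp (wjr J R)"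
proof (induction J arbitrary: R rule: rev_induct)
  case Nil then show ?case by simp
next
  case (snoc t J')
  obtain R' \<rho> where R: "R = R' @ [\<rho>]" using snoc.prems(1)
    by (metis length_0_conv neq_Nil_conv rev_exhaust snoc_eq_iff_butlast)
  have lR': "length J' = length R'" using snoc.prems(1) R by simp
  have base: "H1p (wjr J' R') \<and> (J' = [] \<or> NEp (wjr J' R'))"
  proof (cases "J' = []")
    case True then show ?thesis using lR' by (simp add: H1p_def H1_def)
  next
    case False
    then have "R' \<noteq> []" using lR' by auto
    then have "1 \<le> hd R'" using snoc.prems(3) R by simp
    then show ?thesis using snoc.IH[OF lR' False] by simp
  qed
  have words: "H1 w \<and> w \<noteq> []" if mem: "(e, w) \<in> set (shuffle (wjr J' R') (e1pow \<rho>))" for e w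
  proof -
    obtain c u d v where cu: "(c, u) \<in> set (wjr J' R')" "(d, v) \<in> set (e1pow \<rho>)" "w \<in> set (shuf u v)"
      using shuffle_mem[OF mem] by blast
    have "H1 w" using H1p_shuffle[OF conjunct1[OF base] H1p_e1pow] mem by (auto simp: H1p_def)
    moreover have "w \<noteq> []"
    proof (cases "J' = []")
      case True
      then have "R' = []" using lR' by simp
      then have "1 \<le> \<rho>" using snoc.prems(3) R by simp
      then show ?thesis using shuf_length[OF cu(3)] e1pow_length[OF cu(2)] by auto
    next
      case False
      then have "u \<noteq> []" using base cu(1) by (auto simp: NEp_def)
      then show ?thesis using shuf_length[OF cu(3)] by auto
    qed
    ultimately show ?thesis by simp
  qed
  show ?case unfolding R wjr_snoc using words
    by (fastforce simp: H1p_def NEp_def H1_def)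
qed


lemma prec_length: "prec j q \<Longrightarrow> length j = length q"
  by (simp add: prec_def)

lemma prec_sum: "prec j q \<Longrightarrow> sum_list j \<le> sum_list q"
  unfolding prec_def by (metis order_refl take_all)

lemma prec_Nil: "{j. prec j []} = {[]}"
  by (auto simp: prec_def)

lemma prec_snoc:
  assumes "length j0 = length q0"
  shows "prec (j0 @ [t]) (q0 @ [x]) \<longleftrightarrow> prec j0 q0 \<and> sum_list j0 + t \<le> sum_list q0 + x"
proof
  assume h: "prec (j0 @ [t]) (q0 @ [x])"
  have "sum_list (take s j0) \<le> sum_list (take s q0)" if s: "s \<le> length q0" for s
  proof -
    have s': "s \<le> length (q0 @ [x])" using s by simp
    have "\<forall>s\<le>length (q0 @ [x]). sum_list (take s (j0 @ [t])) \<le> sum_list (take s (q0 @ [x]))"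
      using h unfolding prec_def by blast
    then have "sum_list (take s (j0 @ [t])) \<le> sum_list (take s (q0 @ [x]))"
      using s' by blast
    then show ?thesis using s assms by simp
  qed
  moreover have "sum_list (take (length (q0 @ [x])) (j0 @ [t])) \<le> sum_list (take (length (q0 @ [x])) (q0 @ [x]))"
    using h unfolding prec_def by blast
  then have "sum_list j0 + t \<le> sum_list q0 + x" using assms by simp
  ultimately show "prec j0 q0 \<and> sum_list j0 + t \<le> sum_list q0 + x"
    using assms unfolding prec_def by simp
next
  assume h: "prec j0 q0 \<and> sum_list j0 + t \<le> sum_list q0 + x"
  show "prec (j0 @ [t]) (q0 @ [x])"
    unfolding prec_def
  proof (intro conjI allI impI)
    show "length (j0 @ [t]) = length (q0 @ [x])" using assms by simp
    fix s assume s: "s \<le> length (q0 @ [x])"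
    show "sum_list (take s (j0 @ [t])) \<le> sum_list (take s (q0 @ [x]))"
    proof (cases "s \<le> length q0")
      case True then show ?thesis using h assms by (simp add: prec_def)
    next
      case False
      then have "s = Suc (length q0)" using s by simp
      then show ?thesis using h assms by simp
    qed
  qed
qed

lemma prec_finite: "finite {j. prec j q}"
proof (rule finite_subset)
  show "{j. prec j q} \<subseteq> {j. set j \<subseteq> {0..sum_list q} \<and> length j = length q}"
  proof clarify
    fix j assume h: "prec j q"
    have "x \<le> sum_list q" if "x \<in> set j" for x
      using member_le_sum_list[OF that] prec_sum[OF h] by simp
    then show "set j \<subseteq> {0..sum_list q} \<and> length j = length q" using prec_length[OF h] by auto
  qed
  show "finite {j. set j \<subseteq> {0..sum_list q} \<and> length j = length q}"
    by (rule finite_lists_length_eq) simp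
qed

lemma sum_prec_snoc:
  fixes g :: "nat list \<Rightarrow> 'a::comm_monoid_add"
  shows "(\<Sum>j\<in>{j. prec j (q0 @ [x])}. g j) =
         (\<Sum>j0\<in>{j0. prec j0 q0}. \<Sum>t\<in>{..sum_list q0 + x - sum_list j0}. g (j0 @ [t]))"
proof -
  define A where "A = (SIGMA j0:{j0. prec j0 q0}. {..sum_list q0 + x - sum_list j0})"
  have fin: "finite A" unfolding A_def by (intro finite_SigmaI prec_finite) auto
  have inj: "inj_on (\<lambda>(j0, t). j0 @ [t]) A" by (auto simp: inj_on_def)
  have img: "(\<lambda>(j0, t). j0 @ [t]) ` A = {j. prec j (q0 @ [x])}"
  proof (intro equalityI subsetI)
    fix j assume "j \<in> (\<lambda>(j0, t). j0 @ [t]) ` A"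
    then obtain j0 t where "j = j0 @ [t]" "prec j0 q0" "t \<le> sum_list q0 + x - sum_list j0"
      unfolding A_def by auto
    moreover then have "sum_list j0 \<le> sum_list q0" by (simp add: prec_sum)
    ultimately show "j \<in> {j. prec j (q0 @ [x])}" using prec_snoc[OF prec_length] by auto
  next
    fix j assume "j \<in> {j. prec j (q0 @ [x])}"
    then have h: "prec j (q0 @ [x])" by simp
    then have "j \<noteq> []" using prec_length by fastforce
    then obtain j0 t where j: "j = j0 @ [t]" by (metis rev_exhaust)
    have l: "length j0 = length q0" using prec_length[OF h] j by simp
    then have "prec j0 q0" "sum_list j0 + t \<le> sum_list q0 + x" using prec_snoc[OF l] h j by auto
    then show "j \<in> (\<lambda>(j0, t). j0 @ [t]) ` A" unfolding A_def j by force
  qed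
  have "(\<Sum>j\<in>{j. prec j (q0 @ [x])}. g j) = (\<Sum>p\<in>A. g ((\<lambda>(j0, t). j0 @ [t]) p))"
    unfolding img[symmetric] using sum.reindex[OF inj, of g] by (simp add: comp_def)
  also have "\<dots> = (\<Sum>(j0, t)\<in>A. g (j0 @ [t]))" by (simp add: split_def)
  also have "\<dots> = (\<Sum>j0\<in>{j0. prec j0 q0}. \<Sum>t\<in>{..sum_list q0 + x - sum_list j0}. g (j0 @ [t]))"
    unfolding A_def by (rule sum.Sigma[symmetric]) (auto simp: prec_finite)
  finally show ?thesis .
qed

lemma C_snoc:
  "C (q0 @ [x]) (j0 @ [t]) = (-1) ^ t * of_nat (fact (sum_list q0 + x - sum_list j0))
      / of_nat (fact (sum_list q0 + x - sum_list j0 - t)) * C q0 j0"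
  by (simp add: C_def add.commute diff_diff_eq)

definition cc :: "nat \<Rightarrow> nat \<Rightarrow> complex" where
  "cc M t = (-1) ^ t * of_nat (fact M) / of_nat (fact (M - t))"

lemma cc_0[simp]: "cc M 0 = 1"
  by (simp add: cc_def)

lemma cc_Suc: "t < M \<Longrightarrow> cc M (Suc t) = - (of_nat (M - t) * cc M t)"
proof -
  assume t: "t < M"
  have e: "M - t = Suc (M - Suc t)" using t by simp
  have f: "(fact (M - t) :: nat) = (M - t) * fact (M - Suc t)"
    by (simp only: e fact_Suc of_nat_id)
  have nz: "(of_nat (fact (M - Suc t)) :: complex) \<noteq> 0" by simp
  show ?thesis unfolding cc_def f using nz t by (simp add: field_simps)
qed

lemma pow_deriv:
  "((\<lambda>s. (\<i> * complex_of_real s) ^ k) has_vector_derivative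
      (of_nat k * (\<i> * complex_of_real \<sigma>) ^ (k - 1) * \<i>)) (at \<sigma>)"
proof -
  have "((\<lambda>z. (\<i> * z) ^ k) has_field_derivative (of_nat k * (\<i> * complex_of_real \<sigma>) ^ (k - 1) * \<i>)) (at (complex_of_real \<sigma>))"
  proof -
    have h1: "((\<lambda>z. z ^ k) has_field_derivative of_nat k * (\<i> * complex_of_real \<sigma>) ^ (k - 1)) (at (\<i> * complex_of_real \<sigma>))"
      using DERIV_power[OF DERIV_ident, of k "\<i> * complex_of_real \<sigma>" UNIV] by simp
    have h2: "((\<lambda>z. \<i> * z) has_field_derivative \<i>) (at (complex_of_real \<sigma>))"
      using DERIV_cmult_Id[of \<i>] by simp
    show ?thesis using DERIV_chain2[OF h1 h2] by simp
  qed
  then show ?thesis by (rule has_vector_derivative_real_field)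
qed

lemma telescope:
  fixes l :: "nat \<Rightarrow> real \<Rightarrow> complex" and Dl :: "nat \<Rightarrow> complex"
  assumes D: "\<And>t. t \<le> M \<Longrightarrow> (l t has_vector_derivative Dl t) (at \<sigma>)"
    and D0: "Dl 0 = \<i> * lam"
    and DS: "\<And>t. t < M \<Longrightarrow> Dl (Suc t) = \<i> * l t \<sigma>"
  shows "((\<lambda>s. \<Sum>t\<le>M. cc M t * (\<i> * complex_of_real s) ^ (M - t) * l t s) has_vector_derivative
           (\<i> * (\<i> * complex_of_real \<sigma>) ^ M * lam)) (at \<sigma>)"
proof -
  define w where "w = \<i> * complex_of_real \<sigma>"
  define a where "a t = cc M t * (of_nat (M - t) * w ^ (M - t - 1) * \<i> * l t \<sigma>)" for t
  define b where "b t = cc M t * (w ^ (M - t) * Dl t)" for t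
  have der: "((\<lambda>s. \<Sum>t\<le>M. cc M t * (\<i> * complex_of_real s) ^ (M - t) * l t s) has_vector_derivative
           (\<Sum>t\<le>M. a t + b t)) (at \<sigma>)"
  proof (rule has_vector_derivative_sum)
    fix t assume t: "t \<in> {..M}"
    have "((\<lambda>s. cc M t * ((\<i> * complex_of_real s) ^ (M - t) * l t s)) has_vector_derivative
            cc M t * ((\<i> * complex_of_real \<sigma>) ^ (M - t) * Dl t + (of_nat (M - t) * (\<i> * complex_of_real \<sigma>) ^ (M - t - 1) * \<i>) * l t \<sigma>)) (at \<sigma>)"
      by (rule has_vector_derivative_mult_right, rule has_vector_derivative_mult[OF pow_deriv D]) (use t in simp)
    moreover have "cc M t * ((\<i> * complex_of_real \<sigma>) ^ (M - t) * Dl t + (of_nat (M - t) * (\<i> * complex_of_real \<sigma>) ^ (M - t - 1) * \<i>) * l t \<sigma>) = a t + b t"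
      unfolding a_def b_def w_def by (simp only: distrib_left add.commute mult.assoc)
    ultimately show "((\<lambda>s. cc M t * (\<i> * complex_of_real s) ^ (M - t) * l t s) has_vector_derivative a t + b t) (at \<sigma>)"
      by (simp only: mult.assoc)
  qed
  have "(\<Sum>t\<le>M. a t + b t) = \<i> * w ^ M * lam"
  proof (cases M)
    case 0 then show ?thesis by (simp add: a_def b_def D0)
  next
    case (Suc m)
    have bS: "b (Suc t) = - a t" if "t \<le> m" for t
    proof -
      have tM: "t < M" using that Suc by simp
      have e: "M - Suc t = M - t - 1" by simp
      show ?thesis unfolding a_def b_def using cc_Suc[OF tM] DS[OF tM] e by (simp add: algebra_simps)
    qed
    have aM: "a M = 0" by (simp add: a_def)
    have "(\<Sum>t\<le>M. b t) = b 0 + (\<Sum>t\<le>m. b (Suc t))" unfolding Suc by (rule sum.atMost_Suc_shift)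
    also have "\<dots> = b 0 - (\<Sum>t\<le>m. a t)" using bS by (simp add: sum_negf)
    finally have sb: "(\<Sum>t\<le>M. b t) = b 0 - (\<Sum>t\<le>m. a t)" .
    have sa: "(\<Sum>t\<le>M. a t) = (\<Sum>t\<le>m. a t)" using aM Suc by simp
    show ?thesis unfolding sum.distrib sa sb by (simp add: b_def D0 algebra_simps)
  qed
  then show ?thesis using der by (simp add: w_def)
qed


definition Phi :: "nat list \<Rightarrow> nat list \<Rightarrow> real \<Rightarrow> complex" where
  "Phi qb R \<sigma> = (\<Sum>j\<in>{j. prec j qb}. C qb j * (\<i> * complex_of_real \<sigma>) ^ (sum_list qb - sum_list j)
                   * L (wjr j R) (exp (\<i> * complex_of_real \<sigma>)))"

lemma Phi_Nil: "Phi [] [] \<sigma> = 1"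
  by (simp add: Phi_def prec_Nil C_def L_def Lword_def)

lemma Phi_snoc_eq:
  "Phi (qb0 @ [x]) R \<sigma> = (\<Sum>j0\<in>{j0. prec j0 qb0}. C qb0 j0 *
      (\<Sum>t\<le>sum_list qb0 + x - sum_list j0. cc (sum_list qb0 + x - sum_list j0) t
          * (\<i> * complex_of_real \<sigma>) ^ (sum_list qb0 + x - sum_list j0 - t)
          * L (wjr (j0 @ [t]) R) (exp (\<i> * complex_of_real \<sigma>))))"
  unfolding Phi_def sum_prec_snoc
proof (rule sum.cong[OF refl])
  fix j0 assume "j0 \<in> {j0. prec j0 qb0}"
  show "(\<Sum>t\<le>sum_list qb0 + x - sum_list j0. C (qb0 @ [x]) (j0 @ [t]) * (\<i> * complex_of_real \<sigma>) ^ (sum_list (qb0 @ [x]) - sum_list (j0 @ [t])) *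
          L (wjr (j0 @ [t]) R) (exp (\<i> * complex_of_real \<sigma>))) =
        C qb0 j0 * (\<Sum>t\<le>sum_list qb0 + x - sum_list j0. cc (sum_list qb0 + x - sum_list j0) t
          * (\<i> * complex_of_real \<sigma>) ^ (sum_list qb0 + x - sum_list j0 - t)
          * L (wjr (j0 @ [t]) R) (exp (\<i> * complex_of_real \<sigma>)))"
    unfolding sum_distrib_left
  proof (rule sum.cong[OF refl])
    fix t
    have e: "sum_list (qb0 @ [x]) - sum_list (j0 @ [t]) = sum_list qb0 + x - sum_list j0 - t" by simp
    show "C (qb0 @ [x]) (j0 @ [t]) * (\<i> * complex_of_real \<sigma>) ^ (sum_list (qb0 @ [x]) - sum_list (j0 @ [t])) *
          L (wjr (j0 @ [t]) R) (exp (\<i> * complex_of_real \<sigma>)) =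
        C qb0 j0 * (cc (sum_list qb0 + x - sum_list j0) t * (\<i> * complex_of_real \<sigma>) ^ (sum_list qb0 + x - sum_list j0 - t) *
          L (wjr (j0 @ [t]) R) (exp (\<i> * complex_of_real \<sigma>)))"
      unfolding e C_snoc cc_def by (simp only: mult_ac times_divide_eq_right times_divide_eq_left)
  qed
qed

lemma Phi_deriv:
  assumes len: "length qb0 = length R0" and hdR: "1 \<le> hd (R0 @ [\<rho>])" and sig: "0 < \<sigma>" "\<sigma> < 2 * pi"
  shows "(Phi (qb0 @ [x]) (R0 @ [\<rho>]) has_vector_derivative
           (\<i> * (\<i> * complex_of_real \<sigma>) ^ x * Li [1] (exp (\<i> * complex_of_real \<sigma>)) ^ \<rho> * Phi qb0 R0 \<sigma>)) (at \<sigma>)"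
proof -
  define E where "E = exp (\<i> * complex_of_real \<sigma>)"
  have ED: "E \<in> Dbar" unfolding E_def by (rule exp_circle_Dbar[OF sig])
  define M where "M j0 = sum_list qb0 + x - sum_list j0" for j0
  define l where "l j0 t s = L (wjr (j0 @ [t]) (R0 @ [\<rho>])) (exp (\<i> * complex_of_real s))" for j0 t s
  define lam where "lam j0 = L (wjr j0 R0) E * Li [1] E ^ \<rho>" for j0
  have eqf: "Phi (qb0 @ [x]) (R0 @ [\<rho>]) = (\<lambda>s. \<Sum>j0\<in>{j0. prec j0 qb0}. C qb0 j0 *
       (\<Sum>t\<le>M j0. cc (M j0) t * (\<i> * complex_of_real s) ^ (M j0 - t) * l j0 t s))"
    by (rule ext) (simp only: Phi_snoc_eq M_def l_def)
  have tel: "((\<lambda>s. \<Sum>t\<le>M j0. cc (M j0) t * (\<i> * complex_of_real s) ^ (M j0 - t) * l j0 t s) has_vector_derivative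
               (\<i> * (\<i> * complex_of_real \<sigma>) ^ (M j0) * lam j0)) (at \<sigma>)" if j0: "prec j0 qb0" for j0
  proof (rule telescope[where Dl = "\<lambda>t. if t = 0 then \<i> * lam j0 else \<i> * l j0 (t - 1) \<sigma>"])
    have lj0: "length j0 = length R0" using prec_length[OF j0] len by simp
    have props: "H1p (wjr (j0 @ [t]) (R0 @ [\<rho>])) \<and> NEp (wjr (j0 @ [t]) (R0 @ [\<rho>]))" for t
      by (rule wjr_props) (use lj0 hdR in auto)
    fix t assume "t \<le> M j0"
    show "(l j0 t has_vector_derivative (if t = 0 then \<i> * lam j0 else \<i> * l j0 (t - 1) \<sigma>)) (at \<sigma>)"
    proof (cases t)
      case 0
      have X: "H1p (shuffle (wjr j0 R0) (e1pow \<rho>)) \<and> NEp (shuffle (wjr j0 R0) (e1pow \<rho>))"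
        using H1p_app0D[of "shuffle (wjr j0 R0) (e1pow \<rho>)"] props[of 0] by (simp add: wjr_snoc_0)
      have Hj: "H1p (wjr j0 R0)"
      proof (cases "j0 = []")
        case True then have "R0 = []" using lj0 by simp
        then show ?thesis using True by (simp add: H1p_def H1_def)
      next
        case False
        then have "R0 \<noteq> []" using lj0 by auto
        then have "1 \<le> hd R0" using hdR by simp
        then show ?thesis using wjr_props[OF lj0 False] by simp
      qed
      have "((\<lambda>s. L (app0 (shuffle (wjr j0 R0) (e1pow \<rho>))) (exp (\<i> * complex_of_real s))) has_vector_derivative
              \<i> * L (shuffle (wjr j0 R0) (e1pow \<rho>)) E) (at \<sigma>)"
        unfolding E_def by (rule L_app0_deriv) (use X sig in auto)
      moreover have "L (shuffle (wjr j0 R0) (e1pow \<rho>)) E = lam j0"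
        unfolding lam_def using L_shuffle[OF Hj H1p_e1pow ED] L_e1pow[OF ED] by simp
      ultimately show ?thesis using 0 by (simp add: l_def[abs_def] wjr_snoc_0)
    next
      case (Suc t')
      have X: "H1p (wjr (j0 @ [t']) (R0 @ [\<rho>])) \<and> NEp (wjr (j0 @ [t']) (R0 @ [\<rho>]))"
        using H1p_app0D[of "wjr (j0 @ [t']) (R0 @ [\<rho>])"] props[of t] Suc by (simp add: wjr_snoc_Suc)
      have "((\<lambda>s. L (app0 (wjr (j0 @ [t']) (R0 @ [\<rho>]))) (exp (\<i> * complex_of_real s))) has_vector_derivative
              \<i> * L (wjr (j0 @ [t']) (R0 @ [\<rho>])) (exp (\<i> * complex_of_real \<sigma>))) (at \<sigma>)"
        by (rule L_app0_deriv) (use X sig in auto)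
      then show ?thesis using Suc by (simp add: l_def[abs_def] wjr_snoc_Suc)
    qed
  qed auto
  have der: "(Phi (qb0 @ [x]) (R0 @ [\<rho>]) has_vector_derivative
         (\<Sum>j0\<in>{j0. prec j0 qb0}. C qb0 j0 * (\<i> * (\<i> * complex_of_real \<sigma>) ^ (M j0) * lam j0))) (at \<sigma>)"
    unfolding eqf by (intro has_vector_derivative_sum has_vector_derivative_mult_right tel) simp
  have "(\<Sum>j0\<in>{j0. prec j0 qb0}. C qb0 j0 * (\<i> * (\<i> * complex_of_real \<sigma>) ^ (M j0) * lam j0))
      = \<i> * (\<i> * complex_of_real \<sigma>) ^ x * Li [1] E ^ \<rho> * Phi qb0 R0 \<sigma>"
    unfolding Phi_def sum_distrib_left E_def[symmetric]
  proof (rule sum.cong[OF refl])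
    fix j0 assume "j0 \<in> {j0. prec j0 qb0}"
    then have "sum_list j0 \<le> sum_list qb0" by (simp add: prec_sum)
    then have Mj: "M j0 = x + (sum_list qb0 - sum_list j0)" by (simp add: M_def)
    show "C qb0 j0 * (\<i> * (\<i> * complex_of_real \<sigma>) ^ M j0 * lam j0) =
          \<i> * (\<i> * complex_of_real \<sigma>) ^ x * Li [1] E ^ \<rho> *
          (C qb0 j0 * (\<i> * complex_of_real \<sigma>) ^ (sum_list qb0 - sum_list j0) * L (wjr j0 R0) E)"
      unfolding Mj lam_def power_add by (simp only: mult_ac)
  qed
  then show ?thesis using der by (simp add: E_def)
qed

definition nz :: "nat list \<Rightarrow> nat" where "nz r = length (takeWhile (\<lambda>x. x = 0) r)"

definition qbar_of :: "nat list \<Rightarrow> nat list \<Rightarrow> nat list" where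
  "qbar_of q r = (sum_list (take (nz r) q) + nz r + hd (drop (nz r) q)) # tl (drop (nz r) q)"

lemma nz_less: "\<not> (\<forall>y\<in>set r. y = 0) \<Longrightarrow> nz r < length r"
proof -
  assume h: "\<not> (\<forall>y\<in>set r. y = 0)"
  have "dropWhile (\<lambda>x. x = 0) r \<noteq> []" using h by (simp add: dropWhile_eq_Nil_conv)
  moreover have "length (takeWhile (\<lambda>x. x = 0) r) + length (dropWhile (\<lambda>x. x = 0) r) = length r"
    by (metis length_append takeWhile_dropWhile_id)
  ultimately show ?thesis unfolding nz_def by (cases "dropWhile (\<lambda>x. x = 0) r") auto
qed

lemma f_zero:
  assumes "\<forall>y\<in>set r. y = 0" "length q = length r"
  shows "f q r \<sigma> = B q * (\<i> * complex_of_real \<sigma>) ^ (sum_list q + length q)"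
proof -
  have tw: "takeWhile (\<lambda>x. x = 0) r = r" using assms(1) by (simp add: takeWhile_eq_all_conv)
  show ?thesis unfolding f_def Let_def tw using assms(2)
    by (simp add: prec_Nil C_def L_def Lword_def)
qed

lemma f_Phi:
  assumes "\<not> (\<forall>y\<in>set r. y = 0)" "length q = length r"
  shows "f q r \<sigma> = B (take (nz r) q) * Phi (qbar_of q r) (drop (nz r) r) \<sigma>"
proof -
  have lt: "nz r < length r" using nz_less[OF assms(1)] .
  then have ne: "drop (nz r) q \<noteq> []" using assms(2) by simp
  have sq: "sum_list (qbar_of q r) = sum_list q + nz r"
  proof -
    have "sum_list q = sum_list (take (nz r) q) + sum_list (drop (nz r) q)"
      by (metis append_take_drop_id sum_list_append)
    also have "sum_list (drop (nz r) q) = hd (drop (nz r) q) + sum_list (tl (drop (nz r) q))"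
      using ne by (metis list.collapse sum_list_simps(2))
    finally show ?thesis by (simp add: qbar_of_def)
  qed
  have "f q r \<sigma> = B (take (nz r) q) * (\<Sum>j\<in>{j. prec j (qbar_of q r)}. C (qbar_of q r) j
      * (\<i> * complex_of_real \<sigma>) ^ (sum_list q + nz r - sum_list j) * L (wjr j (drop (nz r) r)) (exp (\<i> * complex_of_real \<sigma>)))"
    unfolding f_def Let_def nz_def[symmetric] using ne by (simp add: qbar_of_def)
  then show ?thesis unfolding Phi_def sq .
qed

lemma nz_snoc:
  assumes "\<not> (\<forall>y\<in>set r0. y = 0)"
  shows "nz (r0 @ [\<rho>]) = nz r0"
proof -
  obtain y where "y \<in> set r0" "y \<noteq> 0" using assms by blast
  then show ?thesis unfolding nz_def by (simp add: takeWhile_append1[of y])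
qed

lemma nz_all0: "\<forall>y\<in>set r0. y = 0 \<Longrightarrow> nz (r0 @ [\<rho>]) = length r0 + (if \<rho> = 0 then 1 else 0)"
proof -
  assume h: "\<forall>y\<in>set r0. y = 0"
  have "takeWhile (\<lambda>x. x = 0) (r0 @ [\<rho>]) = r0 @ takeWhile (\<lambda>x. x = 0) [\<rho>]"
    by (rule takeWhile_append2) (use h in auto)
  then show ?thesis unfolding nz_def by simp
qed

lemma B_snoc: "B (q0 @ [x]) = B q0 / of_nat (sum_list q0 + x + Suc (length q0))"
  by (simp add: B_def add.commute)

theorem f_deriv:
  assumes len: "length q = length r" and ne: "q \<noteq> []" and sig: "0 < \<sigma>" "\<sigma> < 2 * pi"
  shows "(f q r has_vector_derivative
           (\<i> * (\<i> * complex_of_real \<sigma>) ^ last q * Li [1] (exp (\<i> * complex_of_real \<sigma>)) ^ last r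
              * f (butlast q) (butlast r) \<sigma>)) (at \<sigma>)"
proof -
  obtain q0 x where q: "q = q0 @ [x]" using ne by (metis rev_exhaust)
  have "r \<noteq> []" using len ne by auto
  then obtain r0 \<rho> where r: "r = r0 @ [\<rho>]" by (metis rev_exhaust)
  have len0: "length q0 = length r0" using len q r by simp
  define E where "E = exp (\<i> * complex_of_real \<sigma>)"
  define w where "w = \<i> * complex_of_real \<sigma>"
  show ?thesis
  proof (cases "\<forall>y\<in>set r0. y = 0")
    case z0: True
    have f0: "f q0 r0 \<sigma> = B q0 * w ^ (sum_list q0 + length q0)"
      using f_zero[OF z0 len0] by (simp add: w_def)
    show ?thesis
    proof (cases "\<rho> = 0")
      case True
      define K where "K = sum_list q0 + x + Suc (length q0)"
      have fq: "f q r = (\<lambda>s. B q * (\<i> * complex_of_real s) ^ K)"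
        using f_zero[of r q] z0 True len unfolding q r by (auto simp: K_def)
      have d: "(f q r has_vector_derivative B q * (of_nat K * w ^ (K - 1) * \<i>)) (at \<sigma>)"
        unfolding fq w_def by (intro has_vector_derivative_mult_right pow_deriv)
      have eqn: "B q * (of_nat K * w ^ (K - 1) * \<i>) = \<i> * w ^ x * B q0 * w ^ (sum_list q0 + length q0)"
      proof -
        have "K \<noteq> 0" by (simp add: K_def)
        then have K0: "(of_nat K :: complex) \<noteq> 0" by (simp only: of_nat_eq_0_iff not_False_eq_True)
        have Bq: "B q = B q0 / of_nat K" unfolding q B_snoc K_def ..
        have "K - 1 = x + (sum_list q0 + length q0)" by (simp add: K_def)
        then show ?thesis unfolding Bq using K0 by (simp add: power_add field_simps)
      qed
      have t1: "last q = x" "last r = 0" "butlast q = q0" "butlast r = r0" using q r True by simp_all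
      show ?thesis unfolding t1
        by (rule has_vector_derivative_eq_rhs[OF d]) (unfold eqn f0, simp add: w_def mult_ac)
    next
      case False
      then have r1: "1 \<le> \<rho>" by simp
      define N where "N = sum_list q0 + length q0 + x"
      have nzr: "nz r = length r0" using nz_all0[OF z0] False r by simp
      have nzero: "\<not> (\<forall>y\<in>set r. y = 0)" using False r by simp
      have tq: "take (nz r) q = q0" using nzr len0 q by simp
      have dq: "drop (nz r) q = [x]" using nzr len0 q by simp
      have dr: "drop (nz r) r = [\<rho>]" using nzr r by simp
      have qb: "qbar_of q r = [] @ [N]" unfolding qbar_of_def tq dq using nzr len0 by (simp add: N_def)
      have fq: "f q r = (\<lambda>s. B q0 * Phi ([] @ [N]) ([] @ [\<rho>]) s)"
        by (rule ext) (simp only: f_Phi[OF nzero len] tq qb dr append_Nil)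
      have d: "(f q r has_vector_derivative B q0 * (\<i> * w ^ N * Li [1] E ^ \<rho> * Phi [] [] \<sigma>)) (at \<sigma>)"
        unfolding fq w_def E_def
        by (intro has_vector_derivative_mult_right Phi_deriv) (use sig r1 in auto)
      have eqn: "B q0 * (\<i> * w ^ N * Li [1] E ^ \<rho> * Phi [] [] \<sigma>) = \<i> * w ^ x * Li [1] E ^ \<rho> * (B q0 * w ^ (sum_list q0 + length q0))"
        unfolding Phi_Nil N_def by (simp add: power_add mult_ac)
      have t1: "last q = x" "last r = \<rho>" "butlast q = q0" "butlast r = r0" using q r by simp_all
      show ?thesis unfolding t1
        by (rule has_vector_derivative_eq_rhs[OF d]) (unfold eqn f0, simp add: w_def E_def)
    qed
  next
    case nz0: False
    have nzero: "\<not> (\<forall>y\<in>set r. y = 0)" using nz0 r by auto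
    have nzr: "nz r = nz r0" unfolding r by (rule nz_snoc[OF nz0])
    have lt: "nz r0 < length r0" using nz_less[OF nz0] .
    have dq: "drop (nz r0) q = drop (nz r0) q0 @ [x]" using lt len0 q by simp
    have dr: "drop (nz r0) r = drop (nz r0) r0 @ [\<rho>]" using lt r by simp
    have tq: "take (nz r0) q = take (nz r0) q0" using lt len0 q by simp
    have ne0: "drop (nz r0) q0 \<noteq> []" using lt len0 by simp
    have qb: "qbar_of q r = qbar_of q0 r0 @ [x]"
      unfolding qbar_of_def nzr dq tq using ne0 by simp
    have fq: "f q r = (\<lambda>s. B (take (nz r0) q0) * Phi (qbar_of q0 r0 @ [x]) (drop (nz r0) r0 @ [\<rho>]) s)"
      by (rule ext) (simp only: f_Phi[OF nzero len] nzr tq qb dr)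
    have f0: "f q0 r0 \<sigma> = B (take (nz r0) q0) * Phi (qbar_of q0 r0) (drop (nz r0) r0) \<sigma>"
      by (rule f_Phi[OF nz0 len0])
    have lq: "length (qbar_of q0 r0) = length (drop (nz r0) r0)"
      unfolding qbar_of_def using ne0 len0 by simp
    have hd1: "1 \<le> hd (drop (nz r0) r0 @ [\<rho>])"
    proof -
      have "drop (nz r0) r0 = dropWhile (\<lambda>x. x = 0) r0" unfolding nz_def by (simp add: dropWhile_eq_drop)
      moreover have "dropWhile (\<lambda>x. x = 0) r0 \<noteq> []" using nz0 by (simp add: dropWhile_eq_Nil_conv)
      ultimately show ?thesis using hd_dropWhile[of "\<lambda>x. x = 0" r0] by simp
    qed
    have d: "(f q r has_vector_derivative B (take (nz r0) q0) * (\<i> * w ^ x * Li [1] E ^ \<rho> * Phi (qbar_of q0 r0) (drop (nz r0) r0) \<sigma>)) (at \<sigma>)"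
      unfolding fq w_def E_def
      by (intro has_vector_derivative_mult_right Phi_deriv lq hd1 sig)
    have t1: "last q = x" "last r = \<rho>" "butlast q = q0" "butlast r = r0" using q r by simp_all
    show ?thesis unfolding t1
      by (rule has_vector_derivative_eq_rhs[OF d]) (unfold f0, simp add: w_def E_def mult_ac)
  qed
qed

lemma f_Nil: "f [] [] \<sigma> = 1"
  using f_zero[of "[]" "[]" \<sigma>] by (simp add: B_def)

lemma blocks_snoc: "blocks (c @ [k]) zs = blocks c zs @ [take k (drop (sum_list c) zs)]"
  by (induction c arbitrary: zs) (auto simp: add.commute)

lemma blocks_append_irrel: "sum_list c \<le> length xs \<Longrightarrow> blocks c (xs @ ys) = blocks c xs"
  by (induction c arbitrary: xs) auto

lemma length_blocks[simp]: "length (blocks c zs) = length c"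
  by (induction c arbitrary: zs) auto

definition Pf :: "nat list \<Rightarrow> nat list \<Rightarrow> nat list \<Rightarrow> complex" where
  "Pf c xs ys = (\<Prod>j<length c. f (blocks c xs ! j) (blocks c ys ! j) 0)"

lemma Pf_snoc: "Pf (c @ [k]) xs ys = Pf c xs ys * f (take k (drop (sum_list c) xs)) (take k (drop (sum_list c) ys)) 0"
proof -
  have "Pf (c @ [k]) xs ys = (\<Prod>j<Suc (length c). f (blocks (c @ [k]) xs ! j) (blocks (c @ [k]) ys ! j) 0)"
    by (simp add: Pf_def)
  also have "\<dots> = (\<Prod>j<length c. f (blocks (c @ [k]) xs ! j) (blocks (c @ [k]) ys ! j) 0)
                * f (blocks (c @ [k]) xs ! length c) (blocks (c @ [k]) ys ! length c) 0"
    by (rule prod.lessThan_Suc)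
  also have "(\<Prod>j<length c. f (blocks (c @ [k]) xs ! j) (blocks (c @ [k]) ys ! j) 0) = Pf c xs ys"
    unfolding Pf_def blocks_snoc by (intro prod.cong refl) (simp add: nth_append)
  finally show ?thesis by (simp add: blocks_snoc nth_append)
qed

lemma Pf_append_irrel:
  "sum_list c \<le> length xs \<Longrightarrow> sum_list c \<le> length xs' \<Longrightarrow> Pf c (xs @ ys) (xs' @ ys') = Pf c xs xs'"
  by (simp add: Pf_def blocks_append_irrel)

lemma length_le_sum_pos: "\<forall>x\<in>set c. 0 < x \<Longrightarrow> length c \<le> sum_list c"
proof (induction c)
  case Nil then show ?case by simp
next
  case (Cons a c)
  then have "length c \<le> sum_list c" "0 < a" by auto
  then show ?case by simp
qed

lemma comps_finite: "finite (comps n)"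
proof (rule finite_subset)
  show "comps n \<subseteq> {c. set c \<subseteq> {0..n} \<and> length c \<le> n}"
  proof clarify
    fix c assume c: "c \<in> comps n"
    have "x \<le> n" if "x \<in> set c" for x using member_le_sum_list[OF that] c by (simp add: comps_def)
    moreover have "length c \<le> sum_list c"
      using c length_le_sum_pos[of c] unfolding comps_def by simp
    ultimately show "set c \<subseteq> {0..n} \<and> length c \<le> n" using c by (auto simp: comps_def)
  qed
  show "finite {c. set c \<subseteq> {0..n} \<and> length c \<le> n}" by (rule finite_lists_length_le) simp
qed

lemma comps_0: "comps 0 = {[]}"
proof -
  have "c = []" if "c \<in> comps 0" for c
  proof (cases c)
    case (Cons a c') then show ?thesis using that by (auto simp: comps_def)
  qed simp
  then show ?thesis by (auto simp: comps_def)
qed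

lemma comps_ne: "c \<in> comps n \<Longrightarrow> 0 < n \<Longrightarrow> c \<noteq> []"
  by (auto simp: comps_def)

lemma comps_snoc: "c @ [k] \<in> comps n \<longleftrightarrow> c \<in> comps (n - k) \<and> 0 < k \<and> k \<le> n"
  by (auto simp: comps_def)

lemma F_expand:
  assumes "q \<noteq> []" "length r = length q"
  shows "F q r \<sigma> = (\<Sum>c\<in>comps (length q). (-1) ^ length (butlast c) * Pf (butlast c) q r *
      (f (drop (sum_list (butlast c)) q) (drop (sum_list (butlast c)) r) \<sigma>
       - f (drop (sum_list (butlast c)) q) (drop (sum_list (butlast c)) r) 0))"
  unfolding F_def Let_def using assms(1)
proof (simp only: if_False, intro sum.cong refl)
  fix c assume c: "c \<in> comps (length q)"
  then have "c \<noteq> []" using comps_ne assms(1) by auto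
  then obtain c' k where ck: "c = c' @ [k]" by (metis rev_exhaust)
  have sk: "sum_list c' + k = length q" using c ck by (simp add: comps_def)
  have tq: "take k (drop (sum_list c') q) = drop (sum_list c') q" using sk by simp
  have tr: "take k (drop (sum_list c') r) = drop (sum_list c') r" using sk assms(2) by simp
  have bq: "blocks c q = blocks c' q @ [drop (sum_list c') q]" unfolding ck blocks_snoc tq ..
  have br: "blocks c r = blocks c' r @ [drop (sum_list c') r]" unfolding ck blocks_snoc tr ..
  have lc: "length c - 1 = length c'" using ck by simp
  have P: "(\<Prod>j<length c - 1. f (blocks c q ! j) (blocks c r ! j) 0) = Pf c' q r"
    unfolding Pf_def bq br lc by (intro prod.cong refl) (simp add: nth_append)
  show "(-1) ^ (length c - 1) * (\<Prod>j<length c - 1. f (blocks c q ! j) (blocks c r ! j) 0) *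
          (f (blocks c q ! (length c - 1)) (blocks c r ! (length c - 1)) \<sigma> -
           f (blocks c q ! (length c - 1)) (blocks c r ! (length c - 1)) 0) =
        (-1) ^ length (butlast c) * Pf (butlast c) q r *
          (f (drop (sum_list (butlast c)) q) (drop (sum_list (butlast c)) r) \<sigma> -
           f (drop (sum_list (butlast c)) q) (drop (sum_list (butlast c)) r) 0)"
  proof -
    have "blocks c q ! (length c - 1) = drop (sum_list c') q"
      unfolding bq lc by (simp add: nth_append)
    moreover have "blocks c r ! (length c - 1) = drop (sum_list c') r"
      unfolding br lc by (simp add: nth_append)
    moreover have "butlast c = c'" using ck by simp
    ultimately show ?thesis using P lc by simp
  qed
qed

definition inc :: "nat list \<Rightarrow> nat list" where
  "inc c = butlast c @ [Suc (last c)]"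

lemma S1_img: "(\<lambda>c'. c' @ [1]) ` comps n0 = {c \<in> comps (Suc n0). last c = 1}"
proof (intro equalityI subsetI)
  fix c assume "c \<in> (\<lambda>c'. c' @ [1]) ` comps n0"
  then show "c \<in> {c \<in> comps (Suc n0). last c = 1}" by (auto simp: comps_snoc)
next
  fix c assume c: "c \<in> {c \<in> comps (Suc n0). last c = 1}"
  then have "c \<noteq> []" using comps_ne by auto
  then obtain bl k where ck: "c = bl @ [k]" by (metis rev_exhaust)
  then have "k = 1" using c by simp
  then have "bl \<in> comps n0" using c ck by (simp add: comps_snoc)
  then show "c \<in> (\<lambda>c'. c' @ [1]) ` comps n0" using ck \<open>k = 1\<close> by auto
qed

lemma S2_img: "inc ` (comps n0 - {[]}) = {c \<in> comps (Suc n0). last c \<noteq> 1}"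
proof (intro equalityI subsetI)
  fix c assume "c \<in> inc ` (comps n0 - {[]})"
  then obtain c'' where c'': "c'' \<in> comps n0" "c'' \<noteq> []" "c = inc c''" by auto
  then obtain bl k where ck: "c'' = bl @ [k]" by (metis rev_exhaust)
  have "bl \<in> comps (n0 - k)" "0 < k" "k \<le> n0" using c'' ck by (auto simp: comps_snoc)
  then show "c \<in> {c \<in> comps (Suc n0). last c \<noteq> 1}" using c'' ck by (simp add: inc_def comps_snoc)
next
  fix c assume c: "c \<in> {c \<in> comps (Suc n0). last c \<noteq> 1}"
  then have "c \<noteq> []" using comps_ne by auto
  then obtain bl k where ck: "c = bl @ [k]" by (metis rev_exhaust)
  have k: "bl \<in> comps (Suc n0 - k)" "0 < k" "k \<le> Suc n0" "k \<noteq> 1" using c ck by (auto simp: comps_snoc)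
  obtain k' where k': "k = Suc k'" "1 \<le> k'"
  proof (cases k)
    case 0 then show ?thesis using k by simp
  next
    case (Suc k') then show ?thesis using k that by simp
  qed
  then have "bl @ [k'] \<in> comps n0" using k by (simp add: comps_snoc)
  moreover have "c = inc (bl @ [k'])" using ck k' by (simp add: inc_def)
  ultimately show "c \<in> inc ` (comps n0 - {[]})" by blast
qed

lemma inc_inj: "inj_on inc (comps n0 - {[]})"
proof (rule inj_onI)
  fix a b assume a: "a \<in> comps n0 - {[]}" and b: "b \<in> comps n0 - {[]}" and e: "inc a = inc b"
  have "butlast a = butlast b" "last a = last b" using e by (auto simp: inc_def)
  moreover have "a \<noteq> []" "b \<noteq> []" using a b by auto
  ultimately show "a = b" by (metis append_butlast_last_id)
qed

lemma S_eq:
  assumes lq: "length q0 = n0" and lr: "length r0 = n0"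
  shows "(\<Sum>c\<in>comps (Suc n0). (-1) ^ length (butlast c) * Pf (butlast c) (q0 @ [x]) (r0 @ [\<rho>])
            * f (drop (sum_list (butlast c)) q0) (drop (sum_list (butlast c)) r0) \<sigma>) = F q0 r0 \<sigma>"
    (is "(\<Sum>c\<in>comps (Suc n0). ?g c) = _")
proof -
  define S1 where "S1 = {c \<in> comps (Suc n0). last c = 1}"
  define S2 where "S2 = {c \<in> comps (Suc n0). last c \<noteq> 1}"
  have split: "(\<Sum>c\<in>comps (Suc n0). ?g c) = (\<Sum>c\<in>S1. ?g c) + (\<Sum>c\<in>S2. ?g c)"
  proof -
    have "comps (Suc n0) = S1 \<union> S2" by (auto simp: S1_def S2_def)
    moreover have "S1 \<inter> S2 = {}" by (auto simp: S1_def S2_def)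
    moreover have "finite S1" "finite S2" using comps_finite by (auto simp: S1_def S2_def)
    ultimately show ?thesis by (simp add: sum.union_disjoint)
  qed
  have sum1: "(\<Sum>c\<in>S1. ?g c) = (\<Sum>c'\<in>comps n0. (-1) ^ length c' * Pf c' q0 r0)"
  proof -
    have inj1: "inj_on (\<lambda>c'. c' @ [1]) (comps n0)" by (auto simp: inj_on_def)
    have "(\<Sum>c\<in>S1. ?g c) = (\<Sum>c'\<in>comps n0. ?g (c' @ [1]))"
      unfolding S1_def S1_img[symmetric] by (subst sum.reindex[OF inj1]) (simp add: comp_def)
    also have "\<dots> = (\<Sum>c'\<in>comps n0. (-1) ^ length c' * Pf c' q0 r0)"
    proof (rule sum.cong[OF refl])
      fix c' assume c': "c' \<in> comps n0"
      then have s: "sum_list c' = n0" by (simp add: comps_def)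
      have "Pf c' (q0 @ [x]) (r0 @ [\<rho>]) = Pf c' q0 r0" using s lq lr by (simp add: Pf_append_irrel)
      moreover have "drop (sum_list c') q0 = []" "drop (sum_list c') r0 = []" using s lq lr by simp_all
      ultimately show "?g (c' @ [1]) = (-1) ^ length c' * Pf c' q0 r0" by (simp add: f_Nil)
    qed
    finally show ?thesis .
  qed
  have sum2: "(\<Sum>c\<in>S2. ?g c) = (\<Sum>c\<in>comps n0 - {[]}. (-1) ^ length (butlast c) * Pf (butlast c) q0 r0
            * f (drop (sum_list (butlast c)) q0) (drop (sum_list (butlast c)) r0) \<sigma>)"
  proof -
    have "(\<Sum>c\<in>S2. ?g c) = (\<Sum>c\<in>comps n0 - {[]}. ?g (inc c))"
      unfolding S2_def S2_img[symmetric] by (subst sum.reindex[OF inc_inj]) (simp add: comp_def)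
    also have "\<dots> = (\<Sum>c\<in>comps n0 - {[]}. (-1) ^ length (butlast c) * Pf (butlast c) q0 r0
            * f (drop (sum_list (butlast c)) q0) (drop (sum_list (butlast c)) r0) \<sigma>)"
    proof (rule sum.cong[OF refl])
      fix c assume c: "c \<in> comps n0 - {[]}"
      then obtain bl k where ck: "c = bl @ [k]" by (metis DiffD2 rev_exhaust singletonI)
      have s: "sum_list bl \<le> n0" using c ck by (simp add: comps_def)
      have "Pf bl (q0 @ [x]) (r0 @ [\<rho>]) = Pf bl q0 r0" using s lq lr by (simp add: Pf_append_irrel)
      then show "?g (inc c) = (-1) ^ length (butlast c) * Pf (butlast c) q0 r0
            * f (drop (sum_list (butlast c)) q0) (drop (sum_list (butlast c)) r0) \<sigma>"
        using ck by (simp add: inc_def)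
    qed
    finally show ?thesis .
  qed
  show ?thesis
  proof (cases "n0 = 0")
    case True
    then have "q0 = []" "r0 = []" using lq lr by auto
    then show ?thesis unfolding split sum1 sum2 using True by (simp add: comps_0 Pf_def F_def)
  next
    case False
    have ne: "q0 \<noteq> []" using False lq by auto
    have cn: "comps n0 - {[]} = comps n0" using comps_ne False by auto
    have F0: "F q0 r0 \<sigma> = (\<Sum>c\<in>comps n0. (-1) ^ length (butlast c) * Pf (butlast c) q0 r0 *
      (f (drop (sum_list (butlast c)) q0) (drop (sum_list (butlast c)) r0) \<sigma>
       - f (drop (sum_list (butlast c)) q0) (drop (sum_list (butlast c)) r0) 0))"
      using F_expand[OF ne] lq lr by simp
    have A: "(\<Sum>c'\<in>comps n0. (-1) ^ length c' * Pf c' q0 r0) =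
       - (\<Sum>c\<in>comps n0. (-1) ^ length (butlast c) * Pf (butlast c) q0 r0 *
           f (drop (sum_list (butlast c)) q0) (drop (sum_list (butlast c)) r0) 0)"
      unfolding sum_negf[symmetric]
    proof (rule sum.cong[OF refl])
      fix c assume c: "c \<in> comps n0"
      then have "c \<noteq> []" using comps_ne False by auto
      then obtain bl k where ck: "c = bl @ [k]" by (metis rev_exhaust)
      have s: "sum_list bl + k = n0" using c ck by (simp add: comps_def)
      have tq: "take k (drop (sum_list bl) q0) = drop (sum_list bl) q0" using s lq by simp
      have tr: "take k (drop (sum_list bl) r0) = drop (sum_list bl) r0" using s lr by simp
      show "(-1) ^ length c * Pf c q0 r0 = - ((-1) ^ length (butlast c) * Pf (butlast c) q0 r0 *
           f (drop (sum_list (butlast c)) q0) (drop (sum_list (butlast c)) r0) 0)"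
        unfolding ck Pf_snoc tq tr by simp
    qed
    show ?thesis unfolding split sum1 sum2 cn A F0 right_diff_distrib sum_subtractf by simp
  qed
qed

theorem F_deriv:
  fixes q r :: "nat list" and \<sigma> :: real
  assumes "length q = length r" and "length q \<ge> 1"
    and "\<sigma> \<in> {0<..<2 * pi}"
  shows "(F q r has_vector_derivative
           (\<i> * (\<i> * complex_of_real \<sigma>) ^ last q * (Li [1] (exp (\<i> * complex_of_real \<sigma>))) ^ last r
              * F (butlast q) (butlast r) \<sigma>)) (at \<sigma>)"
proof -
  have sig: "0 < \<sigma>" "\<sigma> < 2 * pi" using assms(3) by auto
  have ne: "q \<noteq> []" using assms(2) by auto
  obtain q0 x where q: "q = q0 @ [x]" using ne by (metis rev_exhaust)
  have "r \<noteq> []" using assms(1) ne by auto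
  then obtain r0 \<rho> where r: "r = r0 @ [\<rho>]" by (metis rev_exhaust)
  define n0 where "n0 = length q0"
  have lq: "length q0 = n0" and lr: "length r0 = n0" using assms(1) q r by (auto simp: n0_def)
  have nq: "length q = Suc n0" using q lq by simp
  define K where "K = \<i> * (\<i> * complex_of_real \<sigma>) ^ x * Li [1] (exp (\<i> * complex_of_real \<sigma>)) ^ \<rho>"
  define m where "m c = sum_list (butlast c)" for c :: "nat list"
  have Fq: "F q r = (\<lambda>s. \<Sum>c\<in>comps (Suc n0). (-1) ^ length (butlast c) * Pf (butlast c) q r *
      (f (drop (m c) q) (drop (m c) r) s - f (drop (m c) q) (drop (m c) r) 0))"
    by (rule ext) (simp only: F_expand[OF ne assms(1)[symmetric]] nq m_def)
  have der: "(F q r has_vector_derivative (\<Sum>c\<in>comps (Suc n0). (-1) ^ length (butlast c) * Pf (butlast c) q r *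
      (K * f (drop (m c) q0) (drop (m c) r0) \<sigma>))) (at \<sigma>)"
    unfolding Fq
  proof (intro has_vector_derivative_sum has_vector_derivative_mult_right)
    fix c assume c: "c \<in> comps (Suc n0)"
    then have "c \<noteq> []" using comps_ne by auto
    then obtain bl k where ck: "c = bl @ [k]" by (metis rev_exhaust)
    have s: "sum_list bl + k = Suc n0" "0 < k" using c ck by (auto simp: comps_def)
    have mc: "m c = sum_list bl" using ck by (simp add: m_def)
    have mle: "m c \<le> n0" using s mc by simp
    have dq: "drop (m c) q = drop (m c) q0 @ [x]" using mle lq q by simp
    have dr: "drop (m c) r = drop (m c) r0 @ [\<rho>]" using mle lr r by simp
    have fd: "(f (drop (m c) q) (drop (m c) r) has_vector_derivative K * f (drop (m c) q0) (drop (m c) r0) \<sigma>) (at \<sigma>)"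
      using f_deriv[of "drop (m c) q" "drop (m c) r", OF _ _ sig] dq dr lq lr by (simp add: K_def)
    show "((\<lambda>s. f (drop (m c) q) (drop (m c) r) s - f (drop (m c) q) (drop (m c) r) 0) has_vector_derivative
            K * f (drop (m c) q0) (drop (m c) r0) \<sigma>) (at \<sigma>)"
      using has_vector_derivative_diff[OF fd has_vector_derivative_const] by simp
  qed
  have "(\<Sum>c\<in>comps (Suc n0). (-1) ^ length (butlast c) * Pf (butlast c) q r *
      (K * f (drop (m c) q0) (drop (m c) r0) \<sigma>)) = K * F q0 r0 \<sigma>"
    unfolding S_eq[OF lq lr, of x \<rho> \<sigma>, symmetric] q r m_def sum_distrib_left
    by (intro sum.cong refl) (simp only: mult_ac)
  note eq = this
  have t1: "last q = x" "last r = \<rho>" "butlast q = q0" "butlast r = r0" using q r by simp_all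
  show ?thesis unfolding t1
    by (rule has_vector_derivative_eq_rhs[OF der]) (unfold K_def[symmetric], rule eq)
qed

theorem proposition2:
  fixes q r :: "nat list" and \<sigma> :: real
  assumes "length q = length r" and "length q \<ge> 1"
    and "\<sigma> \<in> {0<..<2 * pi}"
  shows "(F q r has_vector_derivative
           (\<i> * (\<i> * complex_of_real \<sigma>) ^ last q * (Li [1] (exp (\<i> * complex_of_real \<sigma>))) ^ last r
              * F (butlast q) (butlast r) \<sigma>)) (at \<sigma>)"
    using F_deriv[OF assms] .

end
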